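(* Let $\mathcal G$ be a CFG and $0<p<1$ with $\Pr_{term}(\mathcal G)\ge1-p$. Then for every $n\in\mathbb N$, $n\ge1$, there exist the following objects, all definable in the first-order theory of $(\mathbb Q,+,\cdot,<)$: - an inductive invariant $\mathsf{Inv}_n$ containing the initial state $\sigma_{init}$; - a function $\mathsf{SI}_n:\mathsf{Inv}_n\to\mathbb R$ with $\mathsf{SI}_n(\sigma_{init})\le p+\frac1n$, $\mathsf{SI}_n\ge0$, and $\mathsf{SI}_n$ a supermartingale function on $\mathsf{Inv}_n$; - a real $\epsilon_n>0$; - a function $U_n:\mathsf{Inv}_n\to\mathbb N$, bounded above by some $H_n$, with $U_n(\gamma)=0$ for every $\gamma$ that satisfies $\mathsf{SI}_n(\gamma)\ge1$ or $\gamma=\sigma_\bot$. Moreover, for every other state $(l,\mathbf x)\in\mathsf{Inv}_n$: - at assignment or nondeterministic states, $U_n(\sigma')<U_n(l,\mathbf x)$ for every successor $\sigma'$; - at probabilistic states, $\sum\mathsf{Pr}(l,l')[\mathbf x]>\epsilon_n$, where the sum ranges over the successors $(l',\mathbf x')$ with $U_n(l',\mathbf x')<U_n(l,\mathbf x)$.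
   Context: A probabilistic control flow graph (CFG) is a tuple $\mathcal G=(L,V,l_{init},\mathbf x_{init},\mapsto,G,\mathsf{Pr},\mathsf{Upd})$. $L$ is a finite set of locations, partitioned into assignment, nondeterministic and probabilistic locations. The variables range over $\mathbb Q$. The initial state is $\sigma_{init}=(l_{init},\mathbf x_{init})$. There are finitely many guarded transitions. At probabilistic locations, each outgoing transition $(l,l')$ carries a probability expression $\mathsf{Pr}(l,l')$ whose values are positive and sum to $1$ over the enabled transitions. Assignment locations have at most one outgoing transition, carrying an update of one variable by an arithmetic expression. A state is a pair $(l,\mathbf x)$. Every state has at least one, and finitely many, successors. Schedulers map finite paths ending in nondeterministic states to successors and induce probability measures $\mathbb P_{\mathfrak s}$ on runs. The terminal state is $\sigma_\bot=(l_{out},\mathbf 0)$. $\Pr_{term}(\mathcal G)=\inf_{\mathfrak s}\mathbb P_{\mathfrak s}[\text{run visits }\sigma_\bot]$. An inductive invariant is a set of states closed under successors. A function $f:\mathsf{Inv}\to\mathbb R$ is a supermartingale function on $\mathsf{Inv}$ if, at every non-terminal $(l,\mathbf x)\in\mathsf{Inv}$: - at assignment or nondeterministic states, $f(l,\mathbf x)\ge f(\sigma')$ for every successor $\sigma'$; - at probabilistic states, $f(l,\mathbf x)\ge\sum\mathsf{Pr}(l,l')[\mathbf x]f(l',\mathbf x')$, summed over successors. Definability: states are encoded as tuples of rationals, with locations encoded as natural numbers. A set of states, or an $\mathbb N$-valued function, is definable if it, respectively its graph, is defined by a first-order formula over $(\mathbb Q,+,\cdot,<)$. A real-valued function $f$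 is definable if the relation $\{(\sigma,q):q\in\mathbb Q,\ q\le f(\sigma)\}$ is so definable. *)

theory Defs
  imports Complex_Main
begin

(* Variables are indexed 0..nvars-1; a valuation is a rat list of length nvars. *)
datatype aexp = AConst rat | AVar nat | AAdd aexp aexp | AMul aexp aexp | ANeg aexp

fun aeval :: "aexp \<Rightarrow> rat list \<Rightarrow> rat" where
  "aeval (AConst c) x = c"
| "aeval (AVar i) x = x ! i"
| "aeval (AAdd a b) x = aeval a x + aeval b x"
| "aeval (AMul a b) x = aeval a x * aeval b x"
| "aeval (ANeg a) x = - aeval a x"

datatype bexp = BTrue | BLe aexp aexp | BLt aexp aexp | BNot bexp | BAnd bexp bexp | BOr bexp bexp

fun beval :: "bexp \<Rightarrow> rat list \<Rightarrow> bool" where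
  "beval BTrue x = True"
| "beval (BLe a b) x = (aeval a x \<le> aeval b x)"
| "beval (BLt a b) x = (aeval a x < aeval b x)"
| "beval (BNot b) x = (\<not> beval b x)"
| "beval (BAnd b c) x = (beval b x \<and> beval c x)"
| "beval (BOr b c) x = (beval b x \<or> beval c x)"

datatype lkind = Assign | NonDet | Prob

record cfg =
  nlocs :: nat
  nvars :: nat
  kind :: "nat \<Rightarrow> lkind"
  linit :: nat
  xinit :: "rat list"
  lout :: nat
  ctrans :: "(nat \<times> nat) set"
  cguard :: "nat \<times> nat \<Rightarrow> bexp"
  cprob :: "nat \<times> nat \<Rightarrow> aexp"
  cupd :: "nat \<times> nat \<Rightarrow> nat \<times> aexp"   (* variable index, expression *)

type_synonym state = "nat \<times> rat list"

definition valid_state :: "cfg \<Rightarrow> state \<Rightarrow> bool" where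
  "valid_state G \<sigma> \<longleftrightarrow> fst \<sigma> < nlocs G \<and> length (snd \<sigma>) = nvars G"

definition sinit :: "cfg \<Rightarrow> state" where
  "sinit G = (linit G, xinit G)"

definition sbot :: "cfg \<Rightarrow> state" where
  "sbot G = (lout G, replicate (nvars G) 0)"

definition succ :: "cfg \<Rightarrow> state \<Rightarrow> state \<Rightarrow> bool" where
  "succ G \<sigma> \<sigma>' \<longleftrightarrow> valid_state G \<sigma> \<and> (fst \<sigma>, fst \<sigma>') \<in> ctrans G
     \<and> beval (cguard G (fst \<sigma>, fst \<sigma>')) (snd \<sigma>)
     \<and> snd \<sigma>' = (if kind G (fst \<sigma>) = Assign
                  then (case cupd G (fst \<sigma>, fst \<sigma>') of (j, e) \<Rightarrow> (snd \<sigma>)[j := aeval e (snd \<sigma>)])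
                  else snd \<sigma>)"

definition succs :: "cfg \<Rightarrow> state \<Rightarrow> state set" where
  "succs G \<sigma> = {\<sigma>'. succ G \<sigma> \<sigma>'}"

definition trprob :: "cfg \<Rightarrow> state \<Rightarrow> state \<Rightarrow> real" where
  "trprob G \<sigma> \<sigma>' = real_of_rat (aeval (cprob G (fst \<sigma>, fst \<sigma>')) (snd \<sigma>))"

definition enabled :: "cfg \<Rightarrow> nat \<Rightarrow> rat list \<Rightarrow> nat set" where
  "enabled G l x = {l'. (l, l') \<in> ctrans G \<and> beval (cguard G (l, l')) x}"

definition wf_cfg :: "cfg \<Rightarrow> bool" where
  "wf_cfg G \<longleftrightarrow>
     valid_state G (sinit G) \<and> lout G < nlocs G
   \<and> (\<forall>(l, l') \<in> ctrans G. l < nlocs G \<and> l' < nlocs G)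
   \<and> (\<forall>(l, l') \<in> ctrans G. kind G l = Assign \<longrightarrow> fst (cupd G (l, l')) < nvars G)
   \<and> (\<forall>l l1 l2. kind G l = Assign \<and> (l, l1) \<in> ctrans G \<and> (l, l2) \<in> ctrans G \<longrightarrow> l1 = l2)
   \<and> (\<forall>l x. valid_state G (l, x) \<and> kind G l = Prob \<longrightarrow>
         (\<forall>l' \<in> enabled G l x. aeval (cprob G (l, l')) x > 0)
       \<and> (\<Sum>l' \<in> enabled G l x. aeval (cprob G (l, l')) x) = 1)
   \<and> (\<forall>\<sigma>. valid_state G \<sigma> \<longrightarrow> succs G \<sigma> \<noteq> {})"

definition is_sched :: "cfg \<Rightarrow> (state list \<Rightarrow> state) \<Rightarrow> bool" where
  "is_sched G s \<longleftrightarrow> (\<forall>\<pi>. \<pi> \<noteq> [] \<and> valid_state G (last \<pi>) \<and> kind G (fst (last \<pi>)) = NonDet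
                          \<longrightarrow> succ G (last \<pi>) (s \<pi>))"

(* probability, under scheduler s, that the run extending the finite path \<pi>
   visits sbot within n further steps (measure of the corresponding cylinder sets) *)
fun reachp :: "cfg \<Rightarrow> (state list \<Rightarrow> state) \<Rightarrow> nat \<Rightarrow> state list \<Rightarrow> real" where
  "reachp G s 0 \<pi> = (if sbot G \<in> set \<pi> then 1 else 0)"
| "reachp G s (Suc n) \<pi> =
     (if sbot G \<in> set \<pi> then 1 else
      (case kind G (fst (last \<pi>)) of
         NonDet \<Rightarrow> reachp G s n (\<pi> @ [s \<pi>])
       | Assign \<Rightarrow> reachp G s n (\<pi> @ [SOME \<sigma>'. succ G (last \<pi>) \<sigma>'])
       | Prob \<Rightarrow> (\<Sum>\<sigma>' \<in> succs G (last \<pi>). trprob G (last \<pi>) \<sigma>' * reachp G s n (\<pi> @ [\<sigma>']))))"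

(* P_s[run visits sbot] = sup over n of the probability of visiting within n steps *)
definition reach_prob :: "cfg \<Rightarrow> (state list \<Rightarrow> state) \<Rightarrow> real" where
  "reach_prob G s = (SUP n. reachp G s n [sinit G])"

definition Pr_term :: "cfg \<Rightarrow> real" where
  "Pr_term G = (INF s \<in> {s. is_sched G s}. reach_prob G s)"

definition is_inductive_inv :: "cfg \<Rightarrow> state set \<Rightarrow> bool" where
  "is_inductive_inv G Inv \<longleftrightarrow> Inv \<subseteq> {\<sigma>. valid_state G \<sigma>}
     \<and> (\<forall>\<sigma> \<in> Inv. \<forall>\<sigma>'. succ G \<sigma> \<sigma>' \<longrightarrow> \<sigma>' \<in> Inv)"

definition is_supermartingale :: "cfg \<Rightarrow> state set \<Rightarrow> (state \<Rightarrow> real) \<Rightarrow> bool" where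
  "is_supermartingale G Inv f \<longleftrightarrow>
    (\<forall>\<sigma> \<in> Inv. \<sigma> \<noteq> sbot G \<longrightarrow>
       ((kind G (fst \<sigma>) = Assign \<or> kind G (fst \<sigma>) = NonDet) \<longrightarrow> (\<forall>\<sigma>' \<in> succs G \<sigma>. f \<sigma> \<ge> f \<sigma>'))
     \<and> (kind G (fst \<sigma>) = Prob \<longrightarrow> f \<sigma> \<ge> (\<Sum>\<sigma>' \<in> succs G \<sigma>. trprob G \<sigma> \<sigma>' * f \<sigma>')))"

datatype fterm = FVar nat | FAdd fterm fterm | FMul fterm fterm

fun teval :: "(nat \<Rightarrow> rat) \<Rightarrow> fterm \<Rightarrow> rat" where
  "teval e (FVar i) = e i"
| "teval e (FAdd a b) = teval e a + teval e b"
| "teval e (FMul a b) = teval e a * teval e b"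

datatype fform = FEq fterm fterm | FLess fterm fterm | FNot fform | FAnd fform fform | FEx nat fform

fun fholds :: "(nat \<Rightarrow> rat) \<Rightarrow> fform \<Rightarrow> bool" where
  "fholds e (FEq a b) = (teval e a = teval e b)"
| "fholds e (FLess a b) = (teval e a < teval e b)"
| "fholds e (FNot \<phi>) = (\<not> fholds e \<phi>)"
| "fholds e (FAnd \<phi> \<psi>) = (fholds e \<phi> \<and> fholds e \<psi>)"
| "fholds e (FEx i \<phi>) = (\<exists>q. fholds (e(i := q)) \<phi>)"

definition definable_set :: "nat \<Rightarrow> rat list set \<Rightarrow> bool" where
  "definable_set m A \<longleftrightarrow> (\<exists>\<phi>. \<forall>v e. length v = m \<and> (\<forall>i<m. e i = v ! i)
                                    \<longrightarrow> (fholds e \<phi> \<longleftrightarrow> v \<in> A))"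

definition enc :: "state \<Rightarrow> rat list" where
  "enc \<sigma> = of_nat (fst \<sigma>) # snd \<sigma>"

definition definable_states :: "cfg \<Rightarrow> state set \<Rightarrow> bool" where
  "definable_states G A \<longleftrightarrow> definable_set (Suc (nvars G)) (enc ` A)"

definition definable_natfun :: "cfg \<Rightarrow> state set \<Rightarrow> (state \<Rightarrow> nat) \<Rightarrow> bool" where
  "definable_natfun G A U \<longleftrightarrow>
     definable_set (Suc (Suc (nvars G))) {enc \<sigma> @ [of_nat (U \<sigma>)] | \<sigma>. \<sigma> \<in> A}"

definition definable_realfun :: "cfg \<Rightarrow> state set \<Rightarrow> (state \<Rightarrow> real) \<Rightarrow> bool" where
  "definable_realfun G A f \<longleftrightarrow>
     definable_set (Suc (Suc (nvars G))) {enc \<sigma> @ [q] | \<sigma> q. \<sigma> \<in> A \<and> real_of_rat q \<le> f \<sigma>}"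

(* a real constant, viewed as a 0-ary real-valued function *)
definition definable_real :: "real \<Rightarrow> bool" where
  "definable_real r \<longleftrightarrow> definable_set 1 {[q] | q. real_of_rat q \<le> r}"

end

theory Submission
  imports Defs
begin



fun nt :: "nat \<Rightarrow> nat \<Rightarrow> fterm" where
  "nt m 0 = FVar m"
| "nt m (Suc k) = FAdd (nt m k) (FVar (Suc m))"

lemma teval_nt: "e m = 0 \<Longrightarrow> e (Suc m) = 1 \<Longrightarrow> teval e (nt m k) = of_nat k"
  by (induction k) auto

definition cform :: "nat \<Rightarrow> nat \<Rightarrow> rat \<Rightarrow> fform" where
  "cform m y c = (case quotient_of c of (a, b) \<Rightarrow>
     FEq (FAdd (FMul (nt m (nat b)) (FVar y)) (nt m (nat (-a)))) (nt m (nat a)))"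

lemma cform_sem:
  assumes "e m = 0" "e (Suc m) = 1"
  shows "fholds e (cform m y c) \<longleftrightarrow> e y = c"
proof -
  obtain a b where q: "quotient_of c = (a, b)" by (cases "quotient_of c") auto
  have b: "b > 0" using quotient_of_denom_pos[OF q] .
  have c: "c = of_int a / of_int b" using quotient_of_div[OF q] .
  have "fholds e (cform m y c) \<longleftrightarrow> of_nat (nat b) * e y + of_nat (nat (-a)) = (of_nat (nat a) :: rat)"
    using assms by (simp add: cform_def q teval_nt)
  also have "\<dots> \<longleftrightarrow> of_int b * e y = (of_int a :: rat)"
    using b by (cases "a \<ge> 0") (auto simp: of_nat_nat)
  also have "\<dots> \<longleftrightarrow> e y = c" using b by (auto simp: c field_simps)
  finally show ?thesis .
qed

fun tra :: "nat \<Rightarrow> aexp \<Rightarrow> nat \<Rightarrow> fform" where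
  "tra m (AConst c) p = cform m (m+2+p) c"
| "tra m (AVar i) p = (if i < m then FEq (FVar (m+2+p)) (FVar i) else cform m (m+2+p) (([]::rat list) ! (i - m)))"
| "tra m (AAdd a b) p = FEx (m+2+(p+1)) (FEx (m+2+(p+2)) (FAnd (tra m a (p+1)) (FAnd (tra m b (p+2))
      (FEq (FVar (m+2+p)) (FAdd (FVar (m+2+(p+1))) (FVar (m+2+(p+2))))))))"
| "tra m (AMul a b) p = FEx (m+2+(p+1)) (FEx (m+2+(p+2)) (FAnd (tra m a (p+1)) (FAnd (tra m b (p+2))
      (FEq (FVar (m+2+p)) (FMul (FVar (m+2+(p+1))) (FVar (m+2+(p+2))))))))"
| "tra m (ANeg a) p = FEx (m+2+(p+1)) (FAnd (tra m a (p+1))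
      (FEq (FAdd (FVar (m+2+p)) (FVar (m+2+(p+1)))) (FVar m)))"

definition envok :: "nat \<Rightarrow> rat list \<Rightarrow> (nat \<Rightarrow> rat) \<Rightarrow> bool" where
  "envok m v e \<longleftrightarrow> length v = m \<and> (\<forall>i<m. e i = v ! i) \<and> e m = 0 \<and> e (Suc m) = 1"

lemma envok_upd: "envok m v e \<Longrightarrow> j \<ge> m + 2 \<Longrightarrow> envok m v (e(j := q))"
  by (auto simp: envok_def)

lemma nth_beyond: "length v = m \<Longrightarrow> i \<ge> m \<Longrightarrow> v ! i = ([]::'a list) ! (i - m)"
  using nth_append[of v "[]" i] by simp

lemma tra_sem: fixes v :: "rat list" shows "envok m v e \<Longrightarrow> fholds e (tra m a p) \<longleftrightarrow> e (m+2+p) = aeval a v"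
proof (induction a arbitrary: p e)
  case (AConst c) then show ?case by (simp add: cform_sem envok_def)
next
  case (AVar i)
  have l: "length v = m" and z: "e m = 0" "e (Suc m) = 1" and ev: "\<forall>i<m. e i = v ! i"
    using AVar.prems by (auto simp: envok_def)
  show ?case
  proof (cases "i < m")
    case True then show ?thesis using ev by simp
  next
    case False
    have "v ! i = ([]::rat list) ! (i - m)" using nth_beyond[OF l] False by simp
    then show ?thesis using False cform_sem[OF z] by simp
  qed
next
  case (AAdd a b)
  define e' where "e' = (\<lambda>q1 q2. e(m+2+(p+1) := q1, m+2+(p+2) := q2))"
  have ok: "envok m v (e' q1 q2)" for q1 q2
    using AAdd.prems unfolding e'_def by (auto intro!: envok_upd)
  have C: "e' q1 q2 (m+2+p) = e (m+2+p)" "e' q1 q2 (m+2+(p+1)) = q1" "e' q1 q2 (m+2+(p+2)) = q2" for q1 q2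
    by (simp_all add: e'_def)
  have A: "fholds (e' q1 q2) (tra m a (p+1)) \<longleftrightarrow> q1 = aeval a v" for q1 q2
    using AAdd.IH(1)[where p="p+1", OF ok[of q1 q2]] C(2) by (simp only:)
  have B: "fholds (e' q1 q2) (tra m b (p+2)) \<longleftrightarrow> q2 = aeval b v" for q1 q2
    using AAdd.IH(2)[where p="p+2", OF ok[of q1 q2]] C(3) by (simp only:)
  have "fholds e (tra m (AAdd a b) p) \<longleftrightarrow> (\<exists>q1 q2. fholds (e' q1 q2) (tra m a (p+1)) \<and> fholds (e' q1 q2) (tra m b (p+2))
     \<and> e' q1 q2 (m+2+p) = e' q1 q2 (m+2+(p+1)) + e' q1 q2 (m+2+(p+2)))"
    by (simp only: tra.simps fholds.simps teval.simps e'_def)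
  also have "\<dots> \<longleftrightarrow> e (m+2+p) = aeval a v + aeval b v" unfolding A B C by auto
  finally show ?case by simp
next
  case (AMul a b)
  define e' where "e' = (\<lambda>q1 q2. e(m+2+(p+1) := q1, m+2+(p+2) := q2))"
  have ok: "envok m v (e' q1 q2)" for q1 q2
    using AMul.prems unfolding e'_def by (auto intro!: envok_upd)
  have C: "e' q1 q2 (m+2+p) = e (m+2+p)" "e' q1 q2 (m+2+(p+1)) = q1" "e' q1 q2 (m+2+(p+2)) = q2" for q1 q2
    by (simp_all add: e'_def)
  have A: "fholds (e' q1 q2) (tra m a (p+1)) \<longleftrightarrow> q1 = aeval a v" for q1 q2
    using AMul.IH(1)[where p="p+1", OF ok[of q1 q2]] C(2) by (simp only:)
  have B: "fholds (e' q1 q2) (tra m b (p+2)) \<longleftrightarrow> q2 = aeval b v" for q1 q2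
    using AMul.IH(2)[where p="p+2", OF ok[of q1 q2]] C(3) by (simp only:)
  have "fholds e (tra m (AMul a b) p) \<longleftrightarrow> (\<exists>q1 q2. fholds (e' q1 q2) (tra m a (p+1)) \<and> fholds (e' q1 q2) (tra m b (p+2))
     \<and> e' q1 q2 (m+2+p) = e' q1 q2 (m+2+(p+1)) * e' q1 q2 (m+2+(p+2)))"
    by (simp only: tra.simps fholds.simps teval.simps e'_def)
  also have "\<dots> \<longleftrightarrow> e (m+2+p) = aeval a v * aeval b v" unfolding A B C by auto
  finally show ?case by simp
next
  case (ANeg a)
  define e' where "e' = (\<lambda>q1. e(m+2+(p+1) := q1))"
  have ok: "envok m v (e' q1)" for q1
    using ANeg.prems unfolding e'_def by (auto intro!: envok_upd)
  have C: "e' q1 (m+2+p) = e (m+2+p)" "e' q1 (m+2+(p+1)) = q1" "e' q1 m = 0" for q1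
    using ANeg.prems by (simp_all add: e'_def envok_def)
  have A: "fholds (e' q1) (tra m a (p+1)) \<longleftrightarrow> q1 = aeval a v" for q1
    using ANeg.IH(1)[where p="p+1", OF ok[of q1]] C(2) by (simp only:)
  have "fholds e (tra m (ANeg a) p) \<longleftrightarrow> (\<exists>q1. fholds (e' q1) (tra m a (p+1))
     \<and> e' q1 (m+2+p) + e' q1 (m+2+(p+1)) = e' q1 m)"
    by (simp only: tra.simps fholds.simps teval.simps e'_def)
  also have "\<dots> \<longleftrightarrow> e (m+2+p) = - aeval a v" unfolding A C by (auto simp: eq_neg_iff_add_eq_0)
  finally show ?case by simp
qed

fun trb :: "nat \<Rightarrow> bexp \<Rightarrow> fform" where
  "trb m BTrue = FEq (FVar m) (FVar m)"
| "trb m (BLe a b) = FEx (m+2) (FEx (m+3) (FAnd (tra m a 0) (FAnd (tra m b 1)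
      (FNot (FLess (FVar (m+3)) (FVar (m+2)))))))"
| "trb m (BLt a b) = FEx (m+2) (FEx (m+3) (FAnd (tra m a 0) (FAnd (tra m b 1)
      (FLess (FVar (m+2)) (FVar (m+3))))))"
| "trb m (BNot b) = FNot (trb m b)"
| "trb m (BAnd b c) = FAnd (trb m b) (trb m c)"
| "trb m (BOr b c) = FNot (FAnd (FNot (trb m b)) (FNot (trb m c)))"

lemma trb_sem: fixes v :: "rat list" shows "envok m v e \<Longrightarrow> fholds e (trb m b) \<longleftrightarrow> beval b v"
proof (induction b arbitrary: e)
  case (BLe a b)
  define e' where "e' = (\<lambda>q1 q2. e(m+2 := q1, m+3 := q2))"
  have ok: "envok m v (e' q1 q2)" for q1 q2
    using BLe.prems unfolding e'_def by (auto intro!: envok_upd)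
  have C: "e' q1 q2 (m+2+0) = q1" "e' q1 q2 (m+2+1) = q2" "e' q1 q2 (m+2) = q1" "e' q1 q2 (m+3) = q2" for q1 q2
    by (simp_all add: e'_def)
  have A: "fholds (e' q1 q2) (tra m a 0) \<longleftrightarrow> q1 = aeval a v" for q1 q2
    using tra_sem[OF ok[of q1 q2], where a=a and p=0] C(1) by (simp only:)
  have B: "fholds (e' q1 q2) (tra m b 1) \<longleftrightarrow> q2 = aeval b v" for q1 q2
    using tra_sem[OF ok[of q1 q2], where a=b and p=1] C(2) by (simp only:)
  have "fholds e (trb m (BLe a b)) \<longleftrightarrow> (\<exists>q1 q2. fholds (e' q1 q2) (tra m a 0) \<and> fholds (e' q1 q2) (tra m b 1)
     \<and> \<not> e' q1 q2 (m+3) < e' q1 q2 (m+2))"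
    by (simp only: trb.simps fholds.simps teval.simps e'_def)
  also have "\<dots> \<longleftrightarrow> beval (BLe a b) v" unfolding A B C by (auto simp: not_less)
  finally show ?case .
next
  case (BLt a b)
  define e' where "e' = (\<lambda>q1 q2. e(m+2 := q1, m+3 := q2))"
  have ok: "envok m v (e' q1 q2)" for q1 q2
    using BLt.prems unfolding e'_def by (auto intro!: envok_upd)
  have C: "e' q1 q2 (m+2+0) = q1" "e' q1 q2 (m+2+1) = q2" "e' q1 q2 (m+2) = q1" "e' q1 q2 (m+3) = q2" for q1 q2
    by (simp_all add: e'_def)
  have A: "fholds (e' q1 q2) (tra m a 0) \<longleftrightarrow> q1 = aeval a v" for q1 q2
    using tra_sem[OF ok[of q1 q2], where a=a and p=0] C(1) by (simp only:)
  have B: "fholds (e' q1 q2) (tra m b 1) \<longleftrightarrow> q2 = aeval b v" for q1 q2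
    using tra_sem[OF ok[of q1 q2], where a=b and p=1] C(2) by (simp only:)
  have "fholds e (trb m (BLt a b)) \<longleftrightarrow> (\<exists>q1 q2. fholds (e' q1 q2) (tra m a 0) \<and> fholds (e' q1 q2) (tra m b 1)
     \<and> e' q1 q2 (m+2) < e' q1 q2 (m+3))"
    by (simp only: trb.simps fholds.simps teval.simps e'_def)
  also have "\<dots> \<longleftrightarrow> beval (BLt a b) v" unfolding A B C by auto
  finally show ?case .
qed auto

lemma bexp_definable: "definable_set m {v. length v = m \<and> beval b v}"
proof -
  define \<phi> where "\<phi> = FEx m (FEx (Suc m) (FAnd (FAnd (FEq (FAdd (FVar m) (FVar m)) (FVar m))
     (FAnd (FEq (FMul (FVar (Suc m)) (FVar (Suc m))) (FVar (Suc m))) (FNot (FEq (FVar (Suc m)) (FVar m)))))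
     (trb m b)))"
  show ?thesis unfolding definable_set_def
  proof (intro exI[of _ \<phi>] allI impI)
    fix v :: "rat list" and e assume h: "length v = m \<and> (\<forall>i<m. e i = v ! i)"
    define e' where "e' = (\<lambda>z o'. e(m := z, Suc m := o'))"
    have C: "e' z o' m = z" "e' z o' (Suc m) = o'" for z o' by (simp_all add: e'_def)
    have ok: "envok m v (e' 0 1)" using h by (auto simp: envok_def e'_def)
    have "fholds e \<phi> \<longleftrightarrow> (\<exists>z o'. (e' z o' m + e' z o' m = e' z o' m \<and> e' z o' (Suc m) * e' z o' (Suc m) = e' z o' (Suc m)
         \<and> \<not> e' z o' (Suc m) = e' z o' m) \<and> fholds (e' z o') (trb m b))"
      by (simp only: \<phi>_def fholds.simps teval.simps e'_def)
    also have "\<dots> \<longleftrightarrow> (\<exists>z o'. (z + z = z \<and> o' * o' = o' \<and> o' \<noteq> z) \<and> fholds (e' z o') (trb m b))"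
      by (simp only: C)
    also have "\<dots> \<longleftrightarrow> fholds (e' 0 1) (trb m b)"
    proof
      assume "\<exists>z o'. (z + z = z \<and> o' * o' = o' \<and> o' \<noteq> z) \<and> fholds (e' z o') (trb m b)"
      then obtain z o' where zo: "z + z = z" "o' * o' = o'" "o' \<noteq> z" and f: "fholds (e' z o') (trb m b)" by blast
      have "z = 0" using zo(1) by simp
      moreover have "o' = 1" using zo \<open>z = 0\<close>
        by (metis mult_cancel_right1 mult_zero_left)
      ultimately show "fholds (e' 0 1) (trb m b)" using f by simp
    next
      assume "fholds (e' 0 1) (trb m b)"
      then show "\<exists>z o'. (z + z = z \<and> o' * o' = o' \<and> o' \<noteq> z) \<and> fholds (e' z o') (trb m b)"
        by (intro exI[of _ 0] exI[of _ 1]) simp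
    qed
    also have "\<dots> \<longleftrightarrow> beval b v" using trb_sem[OF ok] .
    finally show "fholds e \<phi> \<longleftrightarrow> v \<in> {v. length v = m \<and> beval b v}" using h by simp
  qed
qed




definition rtp :: "cfg \<Rightarrow> state \<Rightarrow> state \<Rightarrow> rat" where
  "rtp G \<sigma> \<sigma>' = aeval (cprob G (fst \<sigma>, fst \<sigma>')) (snd \<sigma>)"

lemma trprob_rtp: "trprob G \<sigma> \<sigma>' = real_of_rat (rtp G \<sigma> \<sigma>')"
  by (simp add: trprob_def rtp_def)

definition nx :: "cfg \<Rightarrow> state \<Rightarrow> nat \<Rightarrow> rat list" where
  "nx G \<sigma> l' = (if kind G (fst \<sigma>) = Assign
        then (case cupd G (fst \<sigma>, l') of (j, e) \<Rightarrow> (snd \<sigma>)[j := aeval e (snd \<sigma>)]) else snd \<sigma>)"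

fun V :: "cfg \<Rightarrow> nat \<Rightarrow> state \<Rightarrow> rat" where
  "V G 0 \<sigma> = (if \<sigma> = sbot G then 1 else 0)"
| "V G (Suc k) \<sigma> = (if \<sigma> = sbot G then 1 else if kind G (fst \<sigma>) = Prob
      then (\<Sum>\<sigma>'\<in>succs G \<sigma>. rtp G \<sigma> \<sigma>' * V G k \<sigma>') else Min (V G k ` succs G \<sigma>))"

declare V.simps[simp del]

context
  fixes G :: cfg
  assumes wf: "wf_cfg G"
begin

lemma succs_eq: "valid_state G \<sigma> \<Longrightarrow> succs G \<sigma> = (\<lambda>l'. (l', nx G \<sigma> l')) ` enabled G (fst \<sigma>) (snd \<sigma>)"
  unfolding succs_def succ_def enabled_def nx_def
  by (cases \<sigma>) (auto simp: image_iff)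

lemma enabled_sub: "enabled G l x \<subseteq> {..<nlocs G}"
  using wf unfolding wf_cfg_def enabled_def by auto

lemma finite_enabled: "finite (enabled G l x)"
  using enabled_sub finite_subset by blast

lemma finite_succs: "finite (succs G \<sigma>)"
proof (cases "valid_state G \<sigma>")
  case True then show ?thesis using succs_eq finite_enabled by simp
next
  case False then show ?thesis by (simp add: succs_def succ_def)
qed

lemma succs_ne: "valid_state G \<sigma> \<Longrightarrow> succs G \<sigma> \<noteq> {}"
  using wf unfolding wf_cfg_def by blast

lemma valid_succ: "succ G \<sigma> \<sigma>' \<Longrightarrow> valid_state G \<sigma>'"
proof -
  assume s: "succ G \<sigma> \<sigma>'"
  then have v: "valid_state G \<sigma>" and t: "(fst \<sigma>, fst \<sigma>') \<in> ctrans G" by (auto simp: succ_def)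
  have "fst \<sigma>' < nlocs G" using wf t unfolding wf_cfg_def by auto
  moreover have "length (snd \<sigma>') = nvars G"
    using s v by (auto simp: succ_def valid_state_def split: prod.splits)
  ultimately show ?thesis by (simp add: valid_state_def)
qed

lemma valid_succs: "\<sigma>' \<in> succs G \<sigma> \<Longrightarrow> valid_state G \<sigma>'"
  using valid_succ by (simp add: succs_def)

lemma inj_pair: "inj_on (\<lambda>l'. (l', f l')) A"
  by (auto simp: inj_on_def)

lemma rtp_pos: "valid_state G \<sigma> \<Longrightarrow> kind G (fst \<sigma>) = Prob \<Longrightarrow> \<sigma>' \<in> succs G \<sigma> \<Longrightarrow> rtp G \<sigma> \<sigma>' > 0"
  using wf unfolding wf_cfg_def
  apply (cases \<sigma>)
  apply (auto simp: succs_eq rtp_def)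
  done

lemma rtp_sum: "valid_state G \<sigma> \<Longrightarrow> kind G (fst \<sigma>) = Prob \<Longrightarrow> (\<Sum>\<sigma>'\<in>succs G \<sigma>. rtp G \<sigma> \<sigma>') = 1"
proof -
  assume v: "valid_state G \<sigma>" and k: "kind G (fst \<sigma>) = Prob"
  have "(\<Sum>\<sigma>'\<in>succs G \<sigma>. rtp G \<sigma> \<sigma>') = (\<Sum>l'\<in>enabled G (fst \<sigma>) (snd \<sigma>). aeval (cprob G (fst \<sigma>, l')) (snd \<sigma>))"
    using v by (simp add: succs_eq sum.reindex[OF inj_pair] rtp_def)
  also have "\<dots> = 1" using wf v k unfolding wf_cfg_def by (cases \<sigma>) auto
  finally show ?thesis .
qed

lemma assign_single: "valid_state G \<sigma> \<Longrightarrow> kind G (fst \<sigma>) = Assign \<Longrightarrow> \<exists>\<tau>. succs G \<sigma> = {\<tau>}"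
proof -
  assume v: "valid_state G \<sigma>" and k: "kind G (fst \<sigma>) = Assign"
  obtain \<tau> where t: "\<tau> \<in> succs G \<sigma>" using succs_ne[OF v] by blast
  have "\<tau>' = \<tau>" if t': "\<tau>' \<in> succs G \<sigma>" for \<tau>'
  proof -
    obtain l1 where "l1 \<in> enabled G (fst \<sigma>) (snd \<sigma>)" "\<tau> = (l1, nx G \<sigma> l1)" using t succs_eq[OF v] by auto
    moreover obtain l2 where "l2 \<in> enabled G (fst \<sigma>) (snd \<sigma>)" "\<tau>' = (l2, nx G \<sigma> l2)" using t' succs_eq[OF v] by auto
    moreover have "l1 = l2" using calculation wf k unfolding wf_cfg_def enabled_def by blast
    ultimately show ?thesis by simp
  qed
  then show ?thesis using t by blast
qed

lemma V_bounds: "valid_state G \<sigma> \<Longrightarrow> 0 \<le> V G k \<sigma> \<and> V G k \<sigma> \<le> 1"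
proof (induction k arbitrary: \<sigma>)
  case 0 then show ?case by (simp add: V.simps)
next
  case (Suc k)
  show ?case
  proof (cases "\<sigma> = sbot G")
    case True then show ?thesis by (simp add: V.simps)
  next
    case nb: False
    show ?thesis
    proof (cases "kind G (fst \<sigma>) = Prob")
      case True
      have "(\<Sum>\<sigma>'\<in>succs G \<sigma>. rtp G \<sigma> \<sigma>' * V G k \<sigma>') \<le> (\<Sum>\<sigma>'\<in>succs G \<sigma>. rtp G \<sigma> \<sigma>')"
        apply (rule sum_mono)
        using Suc.IH[OF valid_succs] rtp_pos[OF Suc.prems True] by (simp add: mult_le_cancel_left1 less_imp_le)
      moreover have "0 \<le> (\<Sum>\<sigma>'\<in>succs G \<sigma>. rtp G \<sigma> \<sigma>' * V G k \<sigma>')"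
        apply (rule sum_nonneg)
        using Suc.IH[OF valid_succs] rtp_pos[OF Suc.prems True] by (simp add: less_imp_le)
      ultimately show ?thesis using nb True rtp_sum[OF Suc.prems True] by (simp add: V.simps)
    next
      case False
      have "Min (V G k ` succs G \<sigma>) \<in> V G k ` succs G \<sigma>"
        using finite_succs succs_ne[OF Suc.prems] by (intro Min_in) auto
      then obtain \<tau> where "\<tau> \<in> succs G \<sigma>" "Min (V G k ` succs G \<sigma>) = V G k \<tau>" by auto
      then show ?thesis using nb False Suc.IH[OF valid_succs] by (simp add: V.simps)
    qed
  qed
qed

lemma Min_img_mono: "finite S \<Longrightarrow> S \<noteq> {} \<Longrightarrow> (\<And>s. s \<in> S \<Longrightarrow> f s \<le> (g s :: 'a::linorder)) \<Longrightarrow> Min (f ` S) \<le> Min (g ` S)"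
proof -
  assume f: "finite S" and ne: "S \<noteq> {}" and le: "\<And>s. s \<in> S \<Longrightarrow> f s \<le> g s"
  have "Min (g ` S) \<in> g ` S" using f ne by (intro Min_in) auto
  then obtain s where s: "s \<in> S" "Min (g ` S) = g s" by auto
  have "Min (f ` S) \<le> f s" using f s by (intro Min_le) auto
  then show ?thesis using s le[OF s(1)] by simp
qed

lemma V_mono: "valid_state G \<sigma> \<Longrightarrow> V G k \<sigma> \<le> V G (Suc k) \<sigma>"
proof (induction k arbitrary: \<sigma>)
  case 0
  show ?case
  proof (cases "\<sigma> = sbot G")
    case True then show ?thesis by (simp add: V.simps)
  next
    case False then show ?thesis using V_bounds[OF 0, of "Suc 0"] by (simp add: V.simps)
  qed
next
  case (Suc k)
  show ?case
  proof (cases "\<sigma> = sbot G")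
    case True then show ?thesis by (simp add: V.simps)
  next
    case nb: False
    show ?thesis
    proof (cases "kind G (fst \<sigma>) = Prob")
      case True
      have "(\<Sum>\<sigma>'\<in>succs G \<sigma>. rtp G \<sigma> \<sigma>' * V G k \<sigma>') \<le> (\<Sum>\<sigma>'\<in>succs G \<sigma>. rtp G \<sigma> \<sigma>' * V G (Suc k) \<sigma>')"
        apply (rule sum_mono)
        using Suc.IH[OF valid_succs] rtp_pos[OF Suc.prems True] by (simp add: mult_left_mono less_imp_le)
      then show ?thesis using nb True by (simp add: V.simps)
    next
      case False
      have "Min (V G k ` succs G \<sigma>) \<le> Min (V G (Suc k) ` succs G \<sigma>)"
        using finite_succs succs_ne[OF Suc.prems] Suc.IH[OF valid_succs] by (intro Min_img_mono) auto
      then show ?thesis using nb False by (simp add: V.simps)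
    qed
  qed
qed

lemma V_mono_le: "valid_state G \<sigma> \<Longrightarrow> j \<le> k \<Longrightarrow> V G j \<sigma> \<le> V G k \<sigma>"
proof (induction k)
  case 0 then show ?case by simp
next
  case (Suc k)
  show ?case
  proof (cases "j = Suc k")
    case False then show ?thesis using Suc V_mono[of \<sigma> k] by force
  qed simp
qed

end



definition Vinf :: "cfg \<Rightarrow> state \<Rightarrow> real" where
  "Vinf G \<sigma> = (SUP k. real_of_rat (V G k \<sigma>))"

lemma tendsto_Min_fin:
  fixes f :: "'b \<Rightarrow> nat \<Rightarrow> real"
  assumes "finite S" "S \<noteq> {}" "\<And>s. s \<in> S \<Longrightarrow> f s \<longlonglongrightarrow> l s"
  shows "(\<lambda>k. Min ((\<lambda>s. f s k) ` S)) \<longlonglongrightarrow> Min (l ` S)"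
  using assms
proof (induction S rule: finite_ne_induct)
  case (singleton x) then show ?case by simp
next
  case (insert x F)
  have "(\<lambda>k. min (f x k) (Min ((\<lambda>s. f s k) ` F))) \<longlonglongrightarrow> min (l x) (Min (l ` F))"
    using insert by (intro tendsto_min) auto
  then show ?case using insert by (simp add: Min_insert)
qed

context
  fixes G :: cfg
  assumes wf: "wf_cfg G"
begin

lemma V_lim: "valid_state G \<sigma> \<Longrightarrow> (\<lambda>k. real_of_rat (V G k \<sigma>)) \<longlonglongrightarrow> Vinf G \<sigma>"
  unfolding Vinf_def
proof (rule LIMSEQ_incseq_SUP)
  assume v: "valid_state G \<sigma>"
  show "bdd_above (range (\<lambda>k. real_of_rat (V G k \<sigma>)))"
    using V_bounds[OF wf v] by (intro bdd_aboveI[of _ 1]) (auto simp: of_rat_less_eq[where 'a=real, of _ 1, simplified])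
  show "incseq (\<lambda>k. real_of_rat (V G k \<sigma>))"
    using V_mono_le[OF wf v] by (intro incseq_SucI) (simp add: V_mono[OF wf v] of_rat_less_eq)
qed

lemma Vinf_bounds: "valid_state G \<sigma> \<Longrightarrow> 0 \<le> Vinf G \<sigma> \<and> Vinf G \<sigma> \<le> 1"
proof -
  assume v: "valid_state G \<sigma>"
  have b: "0 \<le> real_of_rat (V G k \<sigma>) \<and> real_of_rat (V G k \<sigma>) \<le> 1" for k
    using V_bounds[OF wf v, of k] by (simp add: of_rat_less_eq[where 'a=real, of _ 1, simplified] zero_le_of_rat_iff)
  have "0 \<le> Vinf G \<sigma>" using LIMSEQ_le_const[OF V_lim[OF v]] b by auto
  moreover have "Vinf G \<sigma> \<le> 1" using LIMSEQ_le_const2[OF V_lim[OF v]] b by auto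
  ultimately show ?thesis by simp
qed

lemma Vinf_bot: "Vinf G (sbot G) = 1"
proof -
  have "V G k (sbot G) = 1" for k by (cases k) (simp_all add: V.simps)
  then show ?thesis by (simp add: Vinf_def)
qed

lemma Vinf_prob: "valid_state G \<sigma> \<Longrightarrow> \<sigma> \<noteq> sbot G \<Longrightarrow> kind G (fst \<sigma>) = Prob \<Longrightarrow>
    Vinf G \<sigma> = (\<Sum>\<sigma>'\<in>succs G \<sigma>. real_of_rat (rtp G \<sigma> \<sigma>') * Vinf G \<sigma>')"
proof -
  assume v: "valid_state G \<sigma>" and nb: "\<sigma> \<noteq> sbot G" and k: "kind G (fst \<sigma>) = Prob"
  have eq: "real_of_rat (V G (Suc j) \<sigma>) = (\<Sum>\<sigma>'\<in>succs G \<sigma>. real_of_rat (rtp G \<sigma> \<sigma>') * real_of_rat (V G j \<sigma>'))" for j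
    using nb k by (simp add: V.simps of_rat_sum of_rat_mult)
  have "(\<lambda>j. real_of_rat (V G (Suc j) \<sigma>)) \<longlonglongrightarrow> (\<Sum>\<sigma>'\<in>succs G \<sigma>. real_of_rat (rtp G \<sigma> \<sigma>') * Vinf G \<sigma>')"
    unfolding eq by (intro tendsto_sum tendsto_mult tendsto_const V_lim valid_succs[OF wf])
  moreover have "(\<lambda>j. real_of_rat (V G (Suc j) \<sigma>)) \<longlonglongrightarrow> Vinf G \<sigma>"
    using LIMSEQ_Suc[OF V_lim[OF v]] .
  ultimately show ?thesis using LIMSEQ_unique by blast
qed

lemma Vinf_min: "valid_state G \<sigma> \<Longrightarrow> \<sigma> \<noteq> sbot G \<Longrightarrow> kind G (fst \<sigma>) \<noteq> Prob \<Longrightarrow>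
    Vinf G \<sigma> = Min (Vinf G ` succs G \<sigma>)"
proof -
  assume v: "valid_state G \<sigma>" and nb: "\<sigma> \<noteq> sbot G" and k: "kind G (fst \<sigma>) \<noteq> Prob"
  have mo: "mono (real_of_rat)" by (rule monoI) (simp add: of_rat_less_eq)
  have eq: "real_of_rat (V G (Suc j) \<sigma>) = Min ((\<lambda>\<sigma>'. real_of_rat (V G j \<sigma>')) ` succs G \<sigma>)" for j
    using nb k mono_Min_commute[OF mo, of "V G j ` succs G \<sigma>"] finite_succs[OF wf] succs_ne[OF wf v]
    by (simp add: V.simps image_image)
  have "(\<lambda>j. real_of_rat (V G (Suc j) \<sigma>)) \<longlonglongrightarrow> Min (Vinf G ` succs G \<sigma>)"
    unfolding eq by (intro tendsto_Min_fin finite_succs[OF wf] succs_ne[OF wf v] V_lim valid_succs[OF wf])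
  moreover have "(\<lambda>j. real_of_rat (V G (Suc j) \<sigma>)) \<longlonglongrightarrow> Vinf G \<sigma>"
    using LIMSEQ_Suc[OF V_lim[OF v]] .
  ultimately show ?thesis using LIMSEQ_unique by blast
qed

definition sch :: "state list \<Rightarrow> state" where
  "sch \<pi> = (SOME \<sigma>'. \<sigma>' \<in> succs G (last \<pi>) \<and> Vinf G \<sigma>' = Min (Vinf G ` succs G (last \<pi>)))"

lemma sch_prop: "valid_state G (last \<pi>) \<Longrightarrow> sch \<pi> \<in> succs G (last \<pi>) \<and> Vinf G (sch \<pi>) = Min (Vinf G ` succs G (last \<pi>))"
proof -
  assume v: "valid_state G (last \<pi>)"
  have "Min (Vinf G ` succs G (last \<pi>)) \<in> Vinf G ` succs G (last \<pi>)"
    using finite_succs[OF wf] succs_ne[OF wf v] by (intro Min_in) auto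
  then have "\<exists>\<sigma>'. \<sigma>' \<in> succs G (last \<pi>) \<and> Vinf G \<sigma>' = Min (Vinf G ` succs G (last \<pi>))" by force
  then show ?thesis unfolding sch_def by (rule someI_ex)
qed

lemma sch_sched: "is_sched G sch"
  unfolding is_sched_def using sch_prop by (simp add: succs_def)

lemma some_succ: "valid_state G \<sigma> \<Longrightarrow> (SOME \<sigma>'. succ G \<sigma> \<sigma>') \<in> succs G \<sigma>"
  using succs_ne[OF wf] by (simp add: succs_def) (metis empty_Collect_eq someI)

lemma B_step: "sbot G \<notin> set \<pi> \<Longrightarrow> valid_state G \<sigma>' \<Longrightarrow>
   (if sbot G \<in> set (\<pi> @ [\<sigma>']) then 1 else Vinf G (last (\<pi> @ [\<sigma>']))) = Vinf G \<sigma>'"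
  using Vinf_bot by auto

lemma reach_sch: "\<pi> \<noteq> [] \<Longrightarrow> valid_state G (last \<pi>) \<Longrightarrow>
    reachp G sch M \<pi> \<le> (if sbot G \<in> set \<pi> then 1 else Vinf G (last \<pi>))"
proof (induction M arbitrary: \<pi>)
  case 0 then show ?case using Vinf_bounds[OF 0(2)] by simp
next
  case (Suc M)
  show ?case
  proof (cases "sbot G \<in> set \<pi>")
    case True then show ?thesis by simp
  next
    case nb: False
    let ?\<sigma> = "last \<pi>"
    have nb2: "?\<sigma> \<noteq> sbot G" using nb Suc.prems(1) last_in_set by metis
    have v: "valid_state G ?\<sigma>" by (rule Suc.prems(2))
    show ?thesis
    proof (cases "kind G (fst ?\<sigma>)")
      case NonDet
      have sp: "sch \<pi> \<in> succs G ?\<sigma>" "Vinf G (sch \<pi>) = Min (Vinf G ` succs G ?\<sigma>)" using sch_prop[OF v] by auto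
      have vs: "valid_state G (sch \<pi>)" using valid_succs[OF wf sp(1)] .
      have "reachp G sch (Suc M) \<pi> = reachp G sch M (\<pi> @ [sch \<pi>])" using nb NonDet by simp
      also have "\<dots> \<le> Vinf G (sch \<pi>)" using Suc.IH[of "\<pi> @ [sch \<pi>]"] vs B_step[OF nb vs] by simp
      also have "\<dots> = Vinf G ?\<sigma>" using sp(2) Vinf_min[OF v nb2] NonDet by simp
      finally show ?thesis using nb by simp
    next
      case Assign
      define \<tau> where "\<tau> = (SOME \<sigma>'. succ G ?\<sigma> \<sigma>')"
      have ts: "\<tau> \<in> succs G ?\<sigma>" unfolding \<tau>_def by (rule some_succ[OF v])
      have vs: "valid_state G \<tau>" using valid_succs[OF wf ts] .
      obtain \<tau>' where single: "succs G ?\<sigma> = {\<tau>'}" using assign_single[OF wf v Assign] by blast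
      have "reachp G sch (Suc M) \<pi> = reachp G sch M (\<pi> @ [\<tau>])" using nb Assign by (simp add: \<tau>_def)
      also have "\<dots> \<le> Vinf G \<tau>" using Suc.IH[of "\<pi> @ [\<tau>]"] vs B_step[OF nb vs] by simp
      also have "\<dots> = Vinf G ?\<sigma>" using Vinf_min[OF v nb2] Assign single ts by simp
      finally show ?thesis using nb by simp
    next
      case Prob
      have "reachp G sch (Suc M) \<pi> = (\<Sum>\<sigma>'\<in>succs G ?\<sigma>. trprob G ?\<sigma> \<sigma>' * reachp G sch M (\<pi> @ [\<sigma>']))"
        using nb Prob by simp
      also have "\<dots> \<le> (\<Sum>\<sigma>'\<in>succs G ?\<sigma>. real_of_rat (rtp G ?\<sigma> \<sigma>') * Vinf G \<sigma>')"
      proof (rule sum_mono)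
        fix \<sigma>' assume s: "\<sigma>' \<in> succs G ?\<sigma>"
        have vs: "valid_state G \<sigma>'" using valid_succs[OF wf s] .
        have "reachp G sch M (\<pi> @ [\<sigma>']) \<le> Vinf G \<sigma>'" using Suc.IH[of "\<pi> @ [\<sigma>']"] vs B_step[OF nb vs] by simp
        moreover have "0 \<le> real_of_rat (rtp G ?\<sigma> \<sigma>')" using rtp_pos[OF wf v Prob s] by (simp add: less_imp_le zero_le_of_rat_iff)
        ultimately show "trprob G ?\<sigma> \<sigma>' * reachp G sch M (\<pi> @ [\<sigma>']) \<le> real_of_rat (rtp G ?\<sigma> \<sigma>') * Vinf G \<sigma>'"
          by (simp add: trprob_rtp mult_left_mono)
      qed
      also have "\<dots> = Vinf G ?\<sigma>" using Vinf_prob[OF v nb2 Prob] by simp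
      finally show ?thesis using nb by simp
    qed
  qed
qed

lemma reach_bounds: "is_sched G s \<Longrightarrow> \<pi> \<noteq> [] \<Longrightarrow> valid_state G (last \<pi>) \<Longrightarrow>
    0 \<le> reachp G s M \<pi> \<and> reachp G s M \<pi> \<le> 1"
proof (induction M arbitrary: \<pi>)
  case 0 then show ?case by simp
next
  case (Suc M)
  show ?case
  proof (cases "sbot G \<in> set \<pi>")
    case True then show ?thesis by simp
  next
    case nb: False
    let ?\<sigma> = "last \<pi>"
    have v: "valid_state G ?\<sigma>" by (rule Suc.prems(3))
    show ?thesis
    proof (cases "kind G (fst ?\<sigma>)")
      case NonDet
      have "succ G ?\<sigma> (s \<pi>)" using Suc.prems NonDet unfolding is_sched_def by blast
      then have "valid_state G (s \<pi>)" using valid_succ[OF wf] by blast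
      then show ?thesis using Suc.IH[of "\<pi> @ [s \<pi>]"] Suc.prems(1) nb NonDet by simp
    next
      case Assign
      have "valid_state G (SOME \<sigma>'. succ G ?\<sigma> \<sigma>')" using valid_succs[OF wf some_succ[OF v]] .
      then show ?thesis using Suc.IH[of "\<pi> @ [SOME \<sigma>'. succ G ?\<sigma> \<sigma>']"] Suc.prems(1) nb Assign by simp
    next
      case Prob
      have r: "0 \<le> reachp G s M (\<pi> @ [\<sigma>']) \<and> reachp G s M (\<pi> @ [\<sigma>']) \<le> 1" if "\<sigma>' \<in> succs G ?\<sigma>" for \<sigma>'
        using Suc.IH[of "\<pi> @ [\<sigma>']"] Suc.prems(1) valid_succs[OF wf that] by simp
      have p: "0 \<le> trprob G ?\<sigma> \<sigma>'" if "\<sigma>' \<in> succs G ?\<sigma>" for \<sigma>'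
        using rtp_pos[OF wf v Prob that] by (simp add: trprob_rtp less_imp_le zero_le_of_rat_iff)
      have "(\<Sum>\<sigma>'\<in>succs G ?\<sigma>. trprob G ?\<sigma> \<sigma>' * reachp G s M (\<pi> @ [\<sigma>'])) \<le> (\<Sum>\<sigma>'\<in>succs G ?\<sigma>. trprob G ?\<sigma> \<sigma>')"
        by (rule sum_mono) (use r p in \<open>simp add: mult_left_le\<close>)
      also have "\<dots> = 1" using rtp_sum[OF wf v Prob] by (simp add: trprob_rtp flip: of_rat_sum)
      finally have "(\<Sum>\<sigma>'\<in>succs G ?\<sigma>. trprob G ?\<sigma> \<sigma>' * reachp G s M (\<pi> @ [\<sigma>'])) \<le> 1" .
      moreover have "0 \<le> (\<Sum>\<sigma>'\<in>succs G ?\<sigma>. trprob G ?\<sigma> \<sigma>' * reachp G s M (\<pi> @ [\<sigma>']))"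
        by (rule sum_nonneg) (use r p in simp)
      ultimately show ?thesis using nb Prob by simp
    qed
  qed
qed

lemma Pr_term_le: "Pr_term G \<le> Vinf G (sinit G)"
proof -
  have vi: "valid_state G (sinit G)" using wf by (simp add: wf_cfg_def)
  have bd: "0 \<le> reachp G s n [sinit G] \<and> reachp G s n [sinit G] \<le> 1" if "is_sched G s" for s n
    using reach_bounds[OF that, of "[sinit G]"] vi by simp
  have rp0: "0 \<le> reach_prob G s" if "is_sched G s" for s
  proof -
    have "reachp G s 0 [sinit G] \<le> reach_prob G s" unfolding reach_prob_def
      by (rule cSUP_upper) (use bd[OF that] in \<open>auto intro!: bdd_aboveI[of _ 1]\<close>)
    then show ?thesis using bd[OF that, of 0] by linarith
  qed
  have "Pr_term G \<le> reach_prob G sch" unfolding Pr_term_def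
    by (rule cINF_lower) (use sch_sched rp0 in \<open>auto intro!: bdd_belowI[of _ 0]\<close>)
  also have "\<dots> \<le> Vinf G (sinit G)" unfolding reach_prob_def
  proof (rule cSUP_least)
    fix n
    show "reachp G sch n [sinit G] \<le> Vinf G (sinit G)"
      using reach_sch[of "[sinit G]" n] vi Vinf_bot by (cases "sinit G = sbot G") auto
  qed simp
  finally show ?thesis .
qed

end



datatype ite = Lf aexp | Nd bexp ite ite

fun ieval :: "ite \<Rightarrow> rat list \<Rightarrow> rat" where
  "ieval (Lf a) w = aeval a w"
| "ieval (Nd b t1 t2) w = (if beval b w then ieval t1 w else ieval t2 w)"

fun ib :: "(aexp \<Rightarrow> ite) \<Rightarrow> ite \<Rightarrow> ite" where
  "ib h (Lf a) = h a"
| "ib h (Nd b t1 t2) = Nd b (ib h t1) (ib h t2)"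

fun iap2 :: "(aexp \<Rightarrow> aexp \<Rightarrow> ite) \<Rightarrow> ite \<Rightarrow> ite \<Rightarrow> ite" where
  "iap2 f (Lf a) t = ib (f a) t"
| "iap2 f (Nd b t1 t2) t = Nd b (iap2 f t1 t) (iap2 f t2 t)"

lemma ib_sem: "(\<And>a. ieval (h a) w = F (aeval a w)) \<Longrightarrow> ieval (ib h t) w = F (ieval t w)"
  by (induction t) auto

lemma iap2_sem: "(\<And>a b. ieval (f a b) w = F (aeval a w) (aeval b w)) \<Longrightarrow> ieval (iap2 f t1 t2) w = F (ieval t1 w) (ieval t2 w)"
proof (induction t1)
  case (Lf a) then show ?case using ib_sem[of "f a" w "F (aeval a w)"] by simp
qed auto

definition iadd where "iadd = iap2 (\<lambda>a b. Lf (AAdd a b))"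
definition imul where "imul = iap2 (\<lambda>a b. Lf (AMul a b))"
definition imin where "imin = iap2 (\<lambda>a b. Nd (BLe a b) (Lf a) (Lf b))"

lemma iadd_sem: "ieval (iadd t1 t2) w = ieval t1 w + ieval t2 w"
  unfolding iadd_def by (rule iap2_sem) simp
lemma imul_sem: "ieval (imul t1 t2) w = ieval t1 w * ieval t2 w"
  unfolding imul_def by (rule iap2_sem) simp
lemma imin_sem: "ieval (imin t1 t2) w = min (ieval t1 w) (ieval t2 w)"
  unfolding imin_def by (rule iap2_sem) (simp add: min_def)

fun asub :: "nat \<Rightarrow> aexp \<Rightarrow> aexp \<Rightarrow> aexp" where
  "asub i e (AConst c) = AConst c"
| "asub i e (AVar j) = (if j = i then e else AVar j)"
| "asub i e (AAdd a b) = AAdd (asub i e a) (asub i e b)"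
| "asub i e (AMul a b) = AMul (asub i e a) (asub i e b)"
| "asub i e (ANeg a) = ANeg (asub i e a)"

fun bsub :: "nat \<Rightarrow> aexp \<Rightarrow> bexp \<Rightarrow> bexp" where
  "bsub i e BTrue = BTrue"
| "bsub i e (BLe a b) = BLe (asub i e a) (asub i e b)"
| "bsub i e (BLt a b) = BLt (asub i e a) (asub i e b)"
| "bsub i e (BNot b) = BNot (bsub i e b)"
| "bsub i e (BAnd b c) = BAnd (bsub i e b) (bsub i e c)"
| "bsub i e (BOr b c) = BOr (bsub i e b) (bsub i e c)"

fun isub :: "nat \<Rightarrow> aexp \<Rightarrow> ite \<Rightarrow> ite" where
  "isub i e (Lf a) = Lf (asub i e a)"
| "isub i e (Nd b t1 t2) = Nd (bsub i e b) (isub i e t1) (isub i e t2)"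

lemma asub_sem: "i < length w \<Longrightarrow> aeval (asub i e a) w = aeval a (w[i := aeval e w])"
  by (induction a) auto
lemma bsub_sem: "i < length w \<Longrightarrow> beval (bsub i e b) w = beval b (w[i := aeval e w])"
  by (induction b) (auto simp: asub_sem)
lemma isub_sem: "i < length w \<Longrightarrow> ieval (isub i e t) w = ieval t (w[i := aeval e w])"
  by (induction t) (auto simp: asub_sem bsub_sem)

fun ash :: "nat \<Rightarrow> aexp \<Rightarrow> aexp" where
  "ash m (AConst c) = AConst c"
| "ash m (AVar i) = (if i < m then AVar (Suc i) else AConst (([]::rat list) ! (i - m)))"
| "ash m (AAdd a b) = AAdd (ash m a) (ash m b)"
| "ash m (AMul a b) = AMul (ash m a) (ash m b)"
| "ash m (ANeg a) = ANeg (ash m a)"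

fun bsh :: "nat \<Rightarrow> bexp \<Rightarrow> bexp" where
  "bsh m BTrue = BTrue"
| "bsh m (BLe a b) = BLe (ash m a) (ash m b)"
| "bsh m (BLt a b) = BLt (ash m a) (ash m b)"
| "bsh m (BNot b) = BNot (bsh m b)"
| "bsh m (BAnd b c) = BAnd (bsh m b) (bsh m c)"
| "bsh m (BOr b c) = BOr (bsh m b) (bsh m c)"

lemma ash_sem: "length x = m \<Longrightarrow> aeval (ash m a) (l0 # x @ r) = aeval a x"
proof (induction a)
  case (AVar i)
  show ?case
  proof (cases "i < m")
    case True then show ?thesis using AVar by (simp add: nth_append)
  next
    case False
    have "x ! i = ([]::rat list) ! (i - m)" using nth_beyond[OF AVar] False by simp
    then show ?thesis using False by simp
  qed
qed auto

lemma bsh_sem: "length x = m \<Longrightarrow> beval (bsh m b) (l0 # x @ r) = beval b x"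
  by (induction b) (auto simp: ash_sem)

fun tcmp :: "(aexp \<Rightarrow> bexp) \<Rightarrow> ite \<Rightarrow> bexp" where
  "tcmp f (Lf a) = f a"
| "tcmp f (Nd b t1 t2) = BOr (BAnd b (tcmp f t1)) (BAnd (BNot b) (tcmp f t2))"

lemma tcmp_sem: "(\<And>a. beval (f a) w = P (aeval a w)) \<Longrightarrow> beval (tcmp f t) w = P (ieval t w)"
  by (induction t) auto

definition bor_list :: "('a \<Rightarrow> bexp) \<Rightarrow> 'a list \<Rightarrow> bexp" where
  "bor_list F xs = foldr (\<lambda>i b. BOr (F i) b) xs (BNot BTrue)"
definition band_list :: "('a \<Rightarrow> bexp) \<Rightarrow> 'a list \<Rightarrow> bexp" where
  "band_list F xs = foldr (\<lambda>i b. BAnd (F i) b) xs BTrue"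

lemma bor_list_sem: "beval (bor_list F xs) w \<longleftrightarrow> (\<exists>i\<in>set xs. beval (F i) w)"
  unfolding bor_list_def by (induction xs) auto
lemma band_list_sem: "beval (band_list F xs) w \<longleftrightarrow> (\<forall>i\<in>set xs. beval (F i) w)"
  unfolding band_list_def by (induction xs) auto

definition beq :: "aexp \<Rightarrow> aexp \<Rightarrow> bexp" where
  "beq a b = BAnd (BLe a b) (BLe b a)"
lemma beq_sem: "beval (beq a b) w \<longleftrightarrow> aeval a w = aeval b w"
  by (auto simp: beq_def)

definition allz :: "nat \<Rightarrow> bexp" where
  "allz n = band_list (\<lambda>i. beq (AVar (Suc i)) (AConst 0)) [0..<n]"

lemma allz_sem: "length x = n \<Longrightarrow> beval (allz n) (l0 # x @ r) \<longleftrightarrow> x = replicate n 0"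
proof -
  assume l: "length x = n"
  have "beval (allz n) (l0 # x @ r) \<longleftrightarrow> (\<forall>i<n. x ! i = 0)"
    using l by (auto simp: allz_def band_list_sem beq_sem nth_append)
  also have "\<dots> \<longleftrightarrow> x = replicate n 0" using l by (auto simp: list_eq_iff_nth_eq)
  finally show ?thesis .
qed

definition botb :: "cfg \<Rightarrow> nat \<Rightarrow> bexp" where
  "botb G l = (if l = lout G then allz (nvars G) else BNot BTrue)"

lemma botb_sem: "length x = nvars G \<Longrightarrow> beval (botb G l) (l0 # x @ r) \<longleftrightarrow> (l, x) = sbot G"
  by (auto simp: botb_def allz_sem sbot_def)

definition LL :: "cfg \<Rightarrow> nat \<Rightarrow> nat list" where
  "LL G l = sorted_list_of_set {l'. (l, l') \<in> ctrans G}"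

definition updt :: "cfg \<Rightarrow> nat \<Rightarrow> nat \<Rightarrow> ite \<Rightarrow> ite" where
  "updt G l l' t = (if kind G l = Assign then (case cupd G (l, l') of (j, e) \<Rightarrow> isub (Suc j) (ash (nvars G) e) t) else t)"

fun T :: "cfg \<Rightarrow> nat \<Rightarrow> nat \<Rightarrow> ite" where
  "T G 0 l = Nd (botb G l) (Lf (AConst 1)) (Lf (AConst 0))"
| "T G (Suc k) l = Nd (botb G l) (Lf (AConst 1))
     (if kind G l = Prob
      then foldr (\<lambda>l' t. iadd (Nd (bsh (nvars G) (cguard G (l, l'))) (imul (Lf (ash (nvars G) (cprob G (l, l')))) (T G k l')) (Lf (AConst 0))) t) (LL G l) (Lf (AConst 0))
      else foldr (\<lambda>l' t. imin (Nd (bsh (nvars G) (cguard G (l, l'))) (updt G l l' (T G k l')) (Lf (AConst 2))) t) (LL G l) (Lf (AConst 2)))"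

lemma foldr_sum_sem: "ieval (foldr (\<lambda>l' t. iadd (g l') t) L (Lf (AConst 0))) w = (\<Sum>l'\<leftarrow>L. ieval (g l') w)"
  by (induction L) (auto simp: iadd_sem)

lemma foldr_min_sem: "ieval (foldr (\<lambda>l' t. imin (g l') t) L (Lf (AConst c))) w = Min (insert c ((\<lambda>l'. ieval (g l') w) ` set L))"
proof (induction L)
  case (Cons a L)
  have "Min (insert c ((\<lambda>l'. ieval (g l') w) ` set (a # L))) = Min (insert (ieval (g a) w) (insert c ((\<lambda>l'. ieval (g l') w) ` set L)))"
    by (simp add: insert_commute)
  also have "\<dots> = min (ieval (g a) w) (Min (insert c ((\<lambda>l'. ieval (g l') w) ` set L)))"
    by (rule Min_insert) auto
  finally show ?case using Cons by (simp add: imin_sem)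
qed simp




context
  fixes G :: cfg
  assumes wf: "wf_cfg G"
begin

lemma TS_fin: "finite {l'. (l, l') \<in> ctrans G}"
proof -
  have "{l'. (l, l') \<in> ctrans G} \<subseteq> {..<nlocs G}" using wf unfolding wf_cfg_def by auto
  then show ?thesis using finite_subset by blast
qed

lemma TS_valid: "(l, l') \<in> ctrans G \<Longrightarrow> l' < nlocs G"
  using wf unfolding wf_cfg_def by auto

lemma LL_set: "set (LL G l) = {l'. (l, l') \<in> ctrans G}" and LL_dist: "distinct (LL G l)"
  using TS_fin by (simp_all add: LL_def)

lemma enabled_filter: "enabled G l x = {l' \<in> {l'. (l, l') \<in> ctrans G}. beval (cguard G (l, l')) x}"
  by (auto simp: enabled_def)

lemma T_sem: "valid_state G (l, x) \<Longrightarrow> ieval (T G k l) (l0 # x @ r) = V G k (l, x)"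
proof (induction k arbitrary: l x)
  case 0
  have len: "length x = nvars G" using 0 by (simp add: valid_state_def)
  show ?case using botb_sem[OF len] by (simp add: V.simps)
next
  case (Suc k)
  have len: "length x = nvars G" using Suc.prems by (simp add: valid_state_def)
  let ?w = "l0 # x @ r"
  let ?TS = "{l'. (l, l') \<in> ctrans G}"
  show ?case
  proof (cases "(l, x) = sbot G")
    case True then show ?thesis using botb_sem[OF len] by (simp add: V.simps)
  next
    case nb: False
    have nb': "\<not> beval (botb G l) ?w" using botb_sem[OF len] nb by simp
    show ?thesis
    proof (cases "kind G l = Prob")
      case True
      define h where "h = (\<lambda>l'. if beval (cguard G (l, l')) x then aeval (cprob G (l, l')) x * V G k (l', x) else 0)"
      have hv: "ieval (Nd (bsh (nvars G) (cguard G (l, l'))) (imul (Lf (ash (nvars G) (cprob G (l, l')))) (T G k l')) (Lf (AConst 0))) ?w = h l'"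
        if "l' \<in> ?TS" for l'
      proof -
        have v': "valid_state G (l', x)" using that TS_valid len by (simp add: valid_state_def)
        show ?thesis using Suc.IH[OF v'] by (simp add: h_def bsh_sem[OF len] ash_sem[OF len] imul_sem)
      qed
      have "ieval (T G (Suc k) l) ?w = (\<Sum>l'\<leftarrow>LL G l. ieval (Nd (bsh (nvars G) (cguard G (l, l'))) (imul (Lf (ash (nvars G) (cprob G (l, l')))) (T G k l')) (Lf (AConst 0))) ?w)"
        using nb' True by (simp add: foldr_sum_sem)
      also have "\<dots> = (\<Sum>l'\<leftarrow>LL G l. h l')"
        apply (rule arg_cong[where f=sum_list], rule map_cong[OF refl])
        using hv LL_set by (simp del: ieval.simps)
      also have "\<dots> = sum h ?TS" using LL_dist LL_set by (simp add: sum_list_distinct_conv_sum_set)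
      also have "\<dots> = (\<Sum>l'\<in>enabled G l x. aeval (cprob G (l, l')) x * V G k (l', x))"
        unfolding enabled_filter h_def by (rule sum.inter_filter[symmetric, OF TS_fin])
      also have "\<dots> = (\<Sum>\<sigma>'\<in>(\<lambda>l'. (l', x)) ` enabled G l x. rtp G (l, x) \<sigma>' * V G k \<sigma>')"
        by (subst sum.reindex[OF inj_pair[OF wf]]) (simp add: rtp_def)
      also have "\<dots> = (\<Sum>\<sigma>'\<in>succs G (l, x). rtp G (l, x) \<sigma>' * V G k \<sigma>')"
        using Suc.prems True by (simp add: succs_eq[OF wf] nx_def)
      also have "\<dots> = V G (Suc k) (l, x)" using nb True by (simp add: V.simps)
      finally show ?thesis .
    next
      case False
      define g where "g = (\<lambda>l'. if beval (cguard G (l, l')) x then V G k (l', nx G (l, x) l') else 2)"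
      have up: "ieval (updt G l l' (T G k l')) ?w = V G k (l', nx G (l, x) l')" if "l' \<in> ?TS" for l'
      proof (cases "kind G l = Assign")
        case True
        obtain j e where je: "cupd G (l, l') = (j, e)" by (cases "cupd G (l, l')") auto
        have j: "j < nvars G" using wf that True je unfolding wf_cfg_def by fastforce
        have v': "valid_state G (l', x[j := aeval e x])" using that TS_valid len by (simp add: valid_state_def)
        have "?w[Suc j := aeval (ash (nvars G) e) ?w] = l0 # x[j := aeval e x] @ r"
          using j len by (simp add: ash_sem[OF len] list_update_append)
        then show ?thesis using True je j len Suc.IH[OF v']
          by (simp add: updt_def isub_sem nx_def)
      next
        case False
        have v': "valid_state G (l', x)" using that TS_valid len by (simp add: valid_state_def)
        show ?thesis using False Suc.IH[OF v'] by (simp add: updt_def nx_def)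
      qed
      have gv: "ieval (Nd (bsh (nvars G) (cguard G (l, l'))) (updt G l l' (T G k l')) (Lf (AConst 2))) ?w = g l'"
        if "l' \<in> ?TS" for l'
        using up[OF that] by (simp add: g_def bsh_sem[OF len])
      have "ieval (T G (Suc k) l) ?w = Min (insert 2 ((\<lambda>l'. ieval (Nd (bsh (nvars G) (cguard G (l, l'))) (updt G l l' (T G k l')) (Lf (AConst 2))) ?w) ` set (LL G l)))"
        using nb' False by (simp add: foldr_min_sem)
      also have "\<dots> = Min (insert 2 (g ` ?TS))"
        using gv LL_set by (metis (no_types, lifting) image_cong)
      also have "\<dots> = Min (V G k ` succs G (l, x))"
      proof (rule Min_eqI)
        show "finite (insert 2 (g ` ?TS))" using TS_fin by simp
        have fs: "finite (V G k ` succs G (l, x))" using finite_succs[OF wf] by simp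
        have ne: "V G k ` succs G (l, x) \<noteq> {}" using succs_ne[OF wf Suc.prems] by simp
        have m1: "Min (V G k ` succs G (l, x)) \<le> 1"
        proof -
          obtain \<tau> where "\<tau> \<in> succs G (l, x)" using succs_ne[OF wf Suc.prems] by blast
          then show ?thesis using Min_le[OF fs] V_bounds[OF wf valid_succs[OF wf]] by (meson image_eqI order_trans)
        qed
        show "Min (V G k ` succs G (l, x)) \<le> y" if yin: "y \<in> insert 2 (g ` ?TS)" for y
        proof -
          consider "y = 2" | l' where "l' \<in> ?TS" "y = g l'" using yin by blast
          then show ?thesis
          proof cases
            case 1 then show ?thesis using m1 by simp
          next
            case 2
            show ?thesis
            proof (cases "beval (cguard G (l, l')) x")
              case True
              then have "(l', nx G (l, x) l') \<in> succs G (l, x)"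
                using 2 Suc.prems by (simp add: succs_eq[OF wf] enabled_def)
              then show ?thesis using 2 True Min_le[OF fs] by (simp add: g_def)
            next
              case False then show ?thesis using 2 m1 by (simp add: g_def)
            qed
          qed
        qed
        have "Min (V G k ` succs G (l, x)) \<in> V G k ` succs G (l, x)" using fs ne by (rule Min_in)
        then obtain l' where l': "l' \<in> enabled G l x" "Min (V G k ` succs G (l, x)) = V G k (l', nx G (l, x) l')"
          using Suc.prems by (auto simp: succs_eq[OF wf])
        then have "g l' = Min (V G k ` succs G (l, x))" "l' \<in> ?TS" by (auto simp: g_def enabled_def)
        then show "Min (V G k ` succs G (l, x)) \<in> insert 2 (g ` ?TS)" by (metis image_eqI insertI2)
      qed
      also have "\<dots> = V G (Suc k) (l, x)" using nb False by (simp add: V.simps)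
      finally show ?thesis .
    qed
  qed
qed

end



lemma decomp2: "length v = Suc (Suc m) \<Longrightarrow> \<exists>l0 x q. v = l0 # x @ [q] \<and> length x = m"
proof -
  assume l: "length v = Suc (Suc m)"
  obtain l0 v' where v: "v = l0 # v'" using l by (cases v) auto
  have "v' \<noteq> []" using l v by auto
  then obtain x q where "v' = x @ [q]" by (metis rev_exhaust)
  then show ?thesis using l v by auto
qed

lemma decomp1: "length v = Suc m \<Longrightarrow> \<exists>l0 x. v = l0 # x \<and> length x = m"
  by (cases v) auto


lemma set_char:
  fixes G :: cfg and R :: "state \<Rightarrow> rat \<Rightarrow> bool" and B :: "nat \<Rightarrow> bexp"
  assumes hyp: "\<And>l x q. valid_state G (l, x) \<Longrightarrow> beval (B l) (of_nat l # x @ [q]) \<longleftrightarrow> R (l, x) q"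
  shows "{enc \<sigma> @ [q] | \<sigma> q. \<sigma> \<in> {\<sigma>. valid_state G \<sigma>} \<and> R \<sigma> q} =
    {v. length v = Suc (Suc (nvars G)) \<and> beval (bor_list (\<lambda>l. BAnd (beq (AVar 0) (AConst (of_nat l))) (B l)) [0..<nlocs G]) v}"
    (is "?A = ?B")
proof
  show "?A \<subseteq> ?B"
  proof
    fix v assume "v \<in> ?A"
    then obtain l x q where v: "v = enc (l, x) @ [q]" "valid_state G (l, x)" "R (l, x) q" by auto
    have "beval (B l) (of_nat l # x @ [q])" using hyp[OF v(2)] v(3) by simp
    then show "v \<in> ?B" using v by (auto simp: enc_def valid_state_def bor_list_sem beq_sem)
  qed
next
  show "?B \<subseteq> ?A"
  proof
    fix v assume vB: "v \<in> ?B"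
    then obtain l0 x q where v: "v = l0 # x @ [q]" "length x = nvars G" using decomp2 by blast
    obtain l where l: "l < nlocs G" "l0 = of_nat l" "beval (B l) v"
      using vB v by (auto simp: bor_list_sem beq_sem)
    have vs: "valid_state G (l, x)" using l v by (simp add: valid_state_def)
    have "R (l, x) q" using hyp[OF vs] l v by simp
    moreover have "v = enc (l, x) @ [q]" using v l by (simp add: enc_def)
    ultimately show "v \<in> ?A" using vs by blast
  qed
qed

lemma inv_char: "enc ` {\<sigma>. valid_state G \<sigma>} =
    {v. length v = Suc (nvars G) \<and> beval (bor_list (\<lambda>l. beq (AVar 0) (AConst (of_nat l))) [0..<nlocs G]) v}"
    (is "?A = ?B")
proof
  show "?A \<subseteq> ?B" by (auto simp: enc_def valid_state_def bor_list_sem beq_sem)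
next
  show "?B \<subseteq> ?A"
  proof
    fix v assume vB: "v \<in> ?B"
    then obtain l0 x where v: "v = l0 # x" "length x = nvars G" using decomp1 by blast
    obtain l where l: "l < nlocs G" "l0 = of_nat l" using vB v by (auto simp: bor_list_sem beq_sem)
    have "valid_state G (l, x)" using l v by (simp add: valid_state_def)
    moreover have "v = enc (l, x)" using v l by (simp add: enc_def)
    ultimately show "v \<in> ?A" by blast
  qed
qed




theorem mainTheorem9:
  fixes G :: cfg and p :: real and n :: nat
  assumes "wf_cfg G" and "0 < p" and "p < 1" and "Pr_term G \<ge> 1 - p" and "n \<ge> 1"
  shows "\<exists>Inv SI (\<epsilon>::real) U (H::nat).
     is_inductive_inv G Inv \<and> sinit G \<in> Inv \<and> definable_states G Inv
   \<and> definable_realfun G Inv SI \<and> SI (sinit G) \<le> p + 1 / real n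
   \<and> (\<forall>\<sigma> \<in> Inv. SI \<sigma> \<ge> 0) \<and> is_supermartingale G Inv SI
   \<and> \<epsilon> > 0 \<and> definable_real \<epsilon>
   \<and> definable_natfun G Inv U \<and> (\<forall>\<sigma> \<in> Inv. U \<sigma> \<le> H)
   \<and> (\<forall>\<gamma> \<in> Inv. (SI \<gamma> \<ge> 1 \<or> \<gamma> = sbot G) \<longrightarrow> U \<gamma> = 0)
   \<and> (\<forall>\<sigma> \<in> Inv. \<not> (SI \<sigma> \<ge> 1 \<or> \<sigma> = sbot G) \<longrightarrow>
        ((kind G (fst \<sigma>) = Assign \<or> kind G (fst \<sigma>) = NonDet) \<longrightarrow> (\<forall>\<sigma>' \<in> succs G \<sigma>. U \<sigma>' < U \<sigma>))
      \<and> (kind G (fst \<sigma>) = Prob \<longrightarrow>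
           (\<Sum>\<sigma>' \<in> {\<sigma>' \<in> succs G \<sigma>. U \<sigma>' < U \<sigma>}. trprob G \<sigma> \<sigma>') > \<epsilon>))"
proof -
  note wf = assms(1)
  define nv where "nv = nvars G"
  have vi: "valid_state G (sinit G)" using wf by (simp add: wf_cfg_def)
  define \<delta> :: rat where "\<delta> = 1 / (4 * of_nat n)"
  define d :: real where "d = 1 / (4 * real n)"
  have d_def': "real_of_rat \<delta> = d" by (simp add: \<delta>_def d_def of_rat_divide of_rat_mult)
  have dpos: "0 < \<delta>" "\<delta> \<le> 1/4" using assms(5) by (auto simp: \<delta>_def field_simps)
  have dpos': "0 < d" "d \<le> 1/4" using assms(5) by (auto simp: d_def field_simps)
  have "1 - p \<le> Vinf G (sinit G)" using assms(4) Pr_term_le[OF wf] by linarith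
  then have "1 - p - d < (SUP k. real_of_rat (V G k (sinit G)))" using dpos' by (simp add: Vinf_def)
  moreover have "bdd_above (range (\<lambda>k. real_of_rat (V G k (sinit G))))"
    using V_bounds[OF wf vi] by (intro bdd_aboveI[of _ 1]) (auto simp: of_rat_less_eq[where 'a=real, of _ 1, simplified])
  ultimately obtain k0 where k0: "1 - p - d < real_of_rat (V G k0 (sinit G))"
    using less_cSUP_iff[of UNIV] by auto
  define M where "M = Suc k0"
  have M1: "M \<ge> 1" by (simp add: M_def)
  have VM: "1 - p - d < real_of_rat (V G M (sinit G))"
    using k0 V_mono[OF wf vi, of k0] unfolding M_def by (meson less_le_trans of_rat_less_eq)
  define S where "S = (\<lambda>\<sigma>. (1 - V G M \<sigma>) / (1 - \<delta>))"
  define SI where "SI = (\<lambda>\<sigma>. real_of_rat (S \<sigma>))"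
  define thr where "thr = (\<lambda>j::nat. \<delta> * of_nat j / of_nat M)"
  define U where "U = (\<lambda>\<sigma>. if \<delta> < V G M \<sigma> \<and> \<sigma> \<noteq> sbot G then (LEAST j. thr j < V G j \<sigma>) else 0)"
  define \<epsilon>r where "\<epsilon>r = \<delta> / of_nat M"
  define Inv where "Inv = {\<sigma>. valid_state G \<sigma>}"
  have thrM: "thr M = \<delta>" using M1 by (simp add: thr_def)
  have thr0: "thr 0 = 0" by (simp add: thr_def)
  have thr_step: "thr (Suc j) - thr j = \<epsilon>r" for j by (simp add: thr_def \<epsilon>r_def add_divide_distrib distrib_left)
  have thr_nn: "0 \<le> thr j" for j using dpos by (simp add: thr_def)
  have SI_ge1: "SI \<sigma> \<ge> 1 \<longleftrightarrow> V G M \<sigma> \<le> \<delta>" for \<sigma>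
  proof -
    have "SI \<sigma> \<ge> 1 \<longleftrightarrow> S \<sigma> \<ge> 1" unfolding SI_def by (metis of_rat_1 of_rat_less_eq)
    also have "\<dots> \<longleftrightarrow> 1 - \<delta> \<le> 1 - V G M \<sigma>" using dpos by (simp add: S_def le_divide_eq)
    finally show ?thesis by simp
  qed
  show ?thesis
  proof (intro exI[of _ Inv] exI[of _ SI] exI[of _ "real_of_rat \<epsilon>r"] exI[of _ U] exI[of _ M] conjI)
    show "is_inductive_inv G Inv" unfolding is_inductive_inv_def Inv_def using valid_succ[OF wf] by auto
    show "sinit G \<in> Inv" using vi by (simp add: Inv_def)
    show "definable_states G Inv"
      unfolding definable_states_def Inv_def inv_char by (rule bexp_definable)
    show "definable_realfun G Inv SI"
    proof -
      define BS where "BS = (\<lambda>l. tcmp (\<lambda>a. BLe (AAdd (AMul (AVar (Suc nv)) (AConst (1 - \<delta>))) a) (AConst 1)) (T G M l))"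
      have hyp: "beval (BS l) (of_nat l # x @ [q]) \<longleftrightarrow> real_of_rat q \<le> SI (l, x)" if v: "valid_state G (l, x)" for l x q
      proof -
        have len: "length x = nv" using v by (simp add: valid_state_def nv_def)
        have "beval (BS l) (of_nat l # x @ [q]) \<longleftrightarrow> q * (1 - \<delta>) + ieval (T G M l) (of_nat l # x @ [q]) \<le> 1"
          unfolding BS_def by (rule tcmp_sem) (simp add: len nth_append)
        also have "\<dots> \<longleftrightarrow> q * (1 - \<delta>) + V G M (l, x) \<le> 1" using T_sem[OF wf v] by simp
        also have "\<dots> \<longleftrightarrow> q \<le> S (l, x)" using dpos by (simp add: S_def le_divide_eq algebra_simps)
        also have "\<dots> \<longleftrightarrow> real_of_rat q \<le> SI (l, x)" by (simp add: SI_def of_rat_less_eq)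
        finally show ?thesis .
      qed
      have eq: "{enc \<sigma> @ [q] | \<sigma> q. \<sigma> \<in> {\<sigma>. valid_state G \<sigma>} \<and> real_of_rat q \<le> SI \<sigma>} =
        {v. length v = Suc (Suc (nvars G)) \<and> beval (bor_list (\<lambda>l. BAnd (beq (AVar 0) (AConst (of_nat l))) (BS l)) [0..<nlocs G]) v}"
        by (rule set_char) (rule hyp)
      show ?thesis unfolding definable_realfun_def Inv_def eq by (rule bexp_definable)
    qed
    show "SI (sinit G) \<le> p + 1 / real n"
    proof -
      define a where "a = real_of_rat (V G M (sinit G))"
      have si: "SI (sinit G) = (1 - a) / (1 - d)" by (simp add: SI_def S_def of_rat_divide of_rat_diff d_def' a_def)
      have pd: "p * d \<le> 1 * d" using assms(3) dpos' by (intro mult_right_mono) auto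
      have dd: "d * d \<le> (1/4) * d" using dpos' by (intro mult_right_mono) auto
      have ex: "(p + 4 * d) * (1 - d) = p + 4 * d - p * d - 4 * (d * d)" by (simp add: algebra_simps)
      have "1 - a \<le> (p + 4 * d) * (1 - d)" using VM pd dd ex dpos' unfolding a_def by linarith
      then have "(1 - a) / (1 - d) \<le> p + 4 * d" using dpos' by (simp add: divide_le_eq)
      moreover have "1 / real n = 4 * d" by (simp add: d_def)
      ultimately show ?thesis using si by simp
    qed
    show "\<forall>\<sigma>\<in>Inv. 0 \<le> SI \<sigma>"
    proof
      fix \<sigma> assume "\<sigma> \<in> Inv"
      then have "V G M \<sigma> \<le> 1" using V_bounds[OF wf] by (simp add: Inv_def)
      then have "0 \<le> S \<sigma>" using dpos by (simp add: S_def)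
      then show "0 \<le> SI \<sigma>" by (simp add: SI_def zero_le_of_rat_iff)
    qed
    show "is_supermartingale G Inv SI"
      unfolding is_supermartingale_def
    proof (rule ballI, rule impI, rule conjI)
      fix \<sigma> assume "\<sigma> \<in> Inv" and nb: "\<sigma> \<noteq> sbot G"
      then have v: "valid_state G \<sigma>" by (simp add: Inv_def)
      {
        show "kind G (fst \<sigma>) = Assign \<or> kind G (fst \<sigma>) = NonDet \<longrightarrow> (\<forall>\<sigma>'\<in>succs G \<sigma>. SI \<sigma>' \<le> SI \<sigma>)"
        proof (intro impI ballI)
          assume k: "kind G (fst \<sigma>) = Assign \<or> kind G (fst \<sigma>) = NonDet"
          fix \<sigma>' assume s: "\<sigma>' \<in> succs G \<sigma>"
          have "V G M \<sigma> = Min (V G k0 ` succs G \<sigma>)" using nb k by (auto simp: M_def V.simps)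
          also have "\<dots> \<le> V G k0 \<sigma>'" using s finite_succs[OF wf] by (intro Min_le) auto
          also have "\<dots> \<le> V G M \<sigma>'" using V_mono[OF wf valid_succs[OF wf s]] by (simp add: M_def)
          finally have "S \<sigma>' \<le> S \<sigma>" using dpos by (simp add: S_def divide_right_mono)
          then show "SI \<sigma>' \<le> SI \<sigma>" by (simp add: SI_def of_rat_less_eq)
        qed
      }
      show "kind G (fst \<sigma>) = Prob \<longrightarrow> (\<Sum>\<sigma>'\<in>succs G \<sigma>. trprob G \<sigma> \<sigma>' * SI \<sigma>') \<le> SI \<sigma>"
      proof
        assume k: "kind G (fst \<sigma>) = Prob"
        have pos: "0 \<le> rtp G \<sigma> \<sigma>'" if "\<sigma>' \<in> succs G \<sigma>" for \<sigma>'
          using rtp_pos[OF wf v k that] by simp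
        have "(\<Sum>\<sigma>'\<in>succs G \<sigma>. trprob G \<sigma> \<sigma>' * SI \<sigma>') = real_of_rat (\<Sum>\<sigma>'\<in>succs G \<sigma>. rtp G \<sigma> \<sigma>' * S \<sigma>')"
          by (simp add: trprob_rtp SI_def of_rat_sum of_rat_mult)
        also have "(\<Sum>\<sigma>'\<in>succs G \<sigma>. rtp G \<sigma> \<sigma>' * S \<sigma>') = (\<Sum>\<sigma>'\<in>succs G \<sigma>. (rtp G \<sigma> \<sigma>' - rtp G \<sigma> \<sigma>' * V G M \<sigma>') / (1 - \<delta>))"
          by (intro sum.cong) (simp_all add: S_def right_diff_distrib)
        also have "\<dots> = (\<Sum>\<sigma>'\<in>succs G \<sigma>. rtp G \<sigma> \<sigma>' - rtp G \<sigma> \<sigma>' * V G M \<sigma>') / (1 - \<delta>)"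
          by (simp add: sum_divide_distrib)
        also have "\<dots> = (1 - (\<Sum>\<sigma>'\<in>succs G \<sigma>. rtp G \<sigma> \<sigma>' * V G M \<sigma>')) / (1 - \<delta>)"
          by (simp add: sum_subtractf rtp_sum[OF wf v k])
        also have "\<dots> \<le> S \<sigma>"
        proof -
          have "V G M \<sigma> = (\<Sum>\<sigma>'\<in>succs G \<sigma>. rtp G \<sigma> \<sigma>' * V G k0 \<sigma>')" using nb k by (simp add: M_def V.simps)
          also have "\<dots> \<le> (\<Sum>\<sigma>'\<in>succs G \<sigma>. rtp G \<sigma> \<sigma>' * V G M \<sigma>')"
          proof (rule sum_mono)
            fix \<sigma>' assume s: "\<sigma>' \<in> succs G \<sigma>"
            show "rtp G \<sigma> \<sigma>' * V G k0 \<sigma>' \<le> rtp G \<sigma> \<sigma>' * V G M \<sigma>'"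
              using mult_left_mono[OF V_mono[OF wf valid_succs[OF wf s]] pos[OF s]] by (simp add: M_def)
          qed
          finally show ?thesis using dpos by (simp add: S_def divide_right_mono)
        qed
        finally show "(\<Sum>\<sigma>'\<in>succs G \<sigma>. trprob G \<sigma> \<sigma>' * SI \<sigma>') \<le> SI \<sigma>" by (simp add: SI_def of_rat_less_eq)
      qed
    qed
    show "0 < real_of_rat \<epsilon>r" using dpos M1 by (simp add: \<epsilon>r_def zero_less_of_rat_iff)
    show "definable_real (real_of_rat \<epsilon>r)"
    proof -
      have "{[q] | q. real_of_rat q \<le> real_of_rat \<epsilon>r} = {v. length v = 1 \<and> beval (BLe (AVar 0) (AConst \<epsilon>r)) v}"
        by (auto simp: length_Suc_conv of_rat_less_eq)
      then show ?thesis unfolding definable_real_def by (simp only: bexp_definable)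
    qed
    show "definable_natfun G Inv U"
    proof -
      define gt where "gt = (\<lambda>k l. tcmp (\<lambda>a. BLt (AConst (thr k)) a) (T G k l))"
      define u where "u = AVar (Suc nv)"
      define BU where "BU = (\<lambda>l. BOr (BAnd (BOr (BNot (gt M l)) (botb G l)) (beq u (AConst 0)))
         (BAnd (BAnd (gt M l) (BNot (botb G l)))
           (bor_list (\<lambda>k. BAnd (beq u (AConst (of_nat k))) (BAnd (gt k l) (band_list (\<lambda>j. BNot (gt j l)) [0..<k]))) [0..<Suc M])))"
      have hyp: "beval (BU l) (of_nat l # x @ [q]) \<longleftrightarrow> q = of_nat (U (l, x))" if v: "valid_state G (l, x)" for l x q
      proof -
        have len: "length x = nv" using v by (simp add: valid_state_def nv_def)
        define P where "P = (\<lambda>j. thr j < V G j (l, x))"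
        have gts: "beval (gt k l) (of_nat l # x @ [q]) \<longleftrightarrow> P k" for k
        proof -
          have "beval (gt k l) (of_nat l # x @ [q]) \<longleftrightarrow> thr k < ieval (T G k l) (of_nat l # x @ [q])"
            unfolding gt_def by (rule tcmp_sem) simp
          then show ?thesis using T_sem[OF wf v] by (simp add: P_def)
        qed
        have us: "aeval u (of_nat l # x @ [q]) = q" using len by (simp add: u_def nth_append)
        have bs: "beval (botb G l) (of_nat l # x @ [q]) \<longleftrightarrow> (l, x) = sbot G"
          using botb_sem len by (simp add: nv_def)
        have PM: "P M \<longleftrightarrow> \<delta> < V G M (l, x)" using thrM by (simp add: P_def)
        have e1: "beval (BU l) (of_nat l # x @ [q]) \<longleftrightarrow>
           ((\<not> P M \<or> (l, x) = sbot G) \<and> q = 0) \<or>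
           ((P M \<and> (l, x) \<noteq> sbot G) \<and> (\<exists>k\<in>set [0..<Suc M]. q = of_nat k \<and> P k \<and> (\<forall>j\<in>set [0..<k]. \<not> P j)))"
          unfolding BU_def by (simp add: bor_list_sem band_list_sem beq_sem gts us bs)
        show ?thesis
        proof (cases "P M \<and> (l, x) \<noteq> sbot G")
          case False
          have U0: "U (l, x) = 0" using False PM unfolding U_def by (simp only: if_False)
          have "beval (BU l) (of_nat l # x @ [q]) \<longleftrightarrow> q = 0" using e1 False by blast
          then show ?thesis using U0 by simp
        next
          case True
          have U: "U (l, x) = (LEAST j. P j)" using True PM unfolding U_def P_def by (simp only: if_True simp_thms)
          have PL: "P (LEAST j. P j)" by (rule LeastI[of P M]) (use True in blast)
          have LM: "(LEAST j. P j) \<le> M" by (rule Least_le[of P M]) (use True in blast)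
          have nl: "\<not> P j" if "j < (LEAST j. P j)" for j using not_less_Least[OF that] .
          have "(\<exists>k\<in>set [0..<Suc M]. q = of_nat k \<and> P k \<and> (\<forall>j\<in>set [0..<k]. \<not> P j)) \<longleftrightarrow> q = of_nat (LEAST j. P j)"
          proof
            assume "\<exists>k\<in>set [0..<Suc M]. q = of_nat k \<and> P k \<and> (\<forall>j\<in>set [0..<k]. \<not> P j)"
            then obtain k where k: "q = of_nat k" "P k" "\<And>j. j < k \<Longrightarrow> \<not> P j" by auto
            have "(LEAST j. P j) = k"
            proof (rule Least_equality[of P k])
              show "P k" by (rule k(2))
              fix y assume "P y"
              then show "k \<le> y" using k(3) not_le by blast
            qed
            then show "q = of_nat (LEAST j. P j)" using k(1) by simp
          next
            assume q: "q = of_nat (LEAST j. P j)"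
            have m: "(LEAST j. P j) \<in> set [0..<Suc M]" using LM by (metis atLeastLessThan_iff le_imp_less_Suc set_upt zero_le)
            have "\<forall>j\<in>set [0..<(LEAST j. P j)]. \<not> P j"
            proof
              fix j assume "j \<in> set [0..<(LEAST j. P j)]"
              then have "j < (LEAST j. P j)" by (metis atLeastLessThan_iff set_upt)
              then show "\<not> P j" by (rule nl)
            qed
            then show "\<exists>k\<in>set [0..<Suc M]. q = of_nat k \<and> P k \<and> (\<forall>j\<in>set [0..<k]. \<not> P j)"
              using m q PL by blast
          qed
          moreover have "beval (BU l) (of_nat l # x @ [q]) \<longleftrightarrow> (\<exists>k\<in>set [0..<Suc M]. q = of_nat k \<and> P k \<and> (\<forall>j\<in>set [0..<k]. \<not> P j))"
            using e1 True by blast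
          ultimately show ?thesis using U by simp
        qed
      qed
      have eq0: "{enc \<sigma> @ [of_nat (U \<sigma>)] | \<sigma>. \<sigma> \<in> Inv} = {enc \<sigma> @ [q] | \<sigma> q. \<sigma> \<in> {\<sigma>. valid_state G \<sigma>} \<and> q = of_nat (U \<sigma>)}"
        by (auto simp: Inv_def)
      have eq: "{enc \<sigma> @ [q] | \<sigma> q. \<sigma> \<in> {\<sigma>. valid_state G \<sigma>} \<and> q = of_nat (U \<sigma>)} =
        {v. length v = Suc (Suc (nvars G)) \<and> beval (bor_list (\<lambda>l. BAnd (beq (AVar 0) (AConst (of_nat l))) (BU l)) [0..<nlocs G]) v}"
        by (rule set_char) (rule hyp)
      show ?thesis unfolding definable_natfun_def eq0 eq by (rule bexp_definable)
    qed
    show "\<forall>\<sigma>\<in>Inv. U \<sigma> \<le> M"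
    proof
      fix \<sigma> assume "\<sigma> \<in> Inv"
      show "U \<sigma> \<le> M"
      proof (cases "\<delta> < V G M \<sigma> \<and> \<sigma> \<noteq> sbot G")
        case True
        then have "thr M < V G M \<sigma>" using thrM by simp
        then show ?thesis using True by (simp add: U_def Least_le)
      next
        case False then show ?thesis by (auto simp: U_def)
      qed
    qed
    show "\<forall>\<gamma>\<in>Inv. 1 \<le> SI \<gamma> \<or> \<gamma> = sbot G \<longrightarrow> U \<gamma> = 0"
      using SI_ge1 by (auto simp: U_def)
    show "\<forall>\<sigma>\<in>Inv. \<not> (1 \<le> SI \<sigma> \<or> \<sigma> = sbot G) \<longrightarrow>
        ((kind G (fst \<sigma>) = Assign \<or> kind G (fst \<sigma>) = NonDet) \<longrightarrow> (\<forall>\<sigma>' \<in> succs G \<sigma>. U \<sigma>' < U \<sigma>))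
      \<and> (kind G (fst \<sigma>) = Prob \<longrightarrow>
           (\<Sum>\<sigma>' \<in> {\<sigma>' \<in> succs G \<sigma>. U \<sigma>' < U \<sigma>}. trprob G \<sigma> \<sigma>') > real_of_rat \<epsilon>r)"
    proof (rule ballI, rule impI)
      fix \<sigma> assume "\<sigma> \<in> Inv" and ns: "\<not> (1 \<le> SI \<sigma> \<or> \<sigma> = sbot G)"
      then have v: "valid_state G \<sigma>" by (simp add: Inv_def)
      have big: "\<delta> < V G M \<sigma>" and nb: "\<sigma> \<noteq> sbot G" using ns SI_ge1 by auto
      define P where "P = (\<lambda>j. thr j < V G j \<sigma>)"
      have U: "U \<sigma> = (LEAST j. P j)" using big nb unfolding U_def P_def by (simp only: simp_thms if_True)
      have PM: "P M" using big thrM by (simp add: P_def)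
      have PL: "P (LEAST j. P j)" by (rule LeastI[of P M]) (rule PM)
      have nz: "(LEAST j. P j) \<noteq> 0"
      proof
        assume "(LEAST j. P j) = 0"
        then have "P 0" using PL by simp
        then show False using nb thr0 by (simp add: P_def V.simps)
      qed
      then obtain j where kj: "(LEAST j. P j) = Suc j" using not0_implies_Suc by blast
      have Pk: "thr (Suc j) < V G (Suc j) \<sigma>" using PL kj by (simp add: P_def)
      have good: "U \<sigma>' < U \<sigma>" if s: "\<sigma>' \<in> succs G \<sigma>" and g: "thr j < V G j \<sigma>'" for \<sigma>'
      proof (cases "\<delta> < V G M \<sigma>' \<and> \<sigma>' \<noteq> sbot G")
        case True
        then have "U \<sigma>' = (LEAST i. thr i < V G i \<sigma>')" unfolding U_def by (simp only: simp_thms if_True)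
        also have "\<dots> \<le> j" by (rule Least_le) (rule g)
        finally show ?thesis using U kj by simp
      next
        case False
        then have "U \<sigma>' = 0" unfolding U_def by (simp only: if_False)
        then show ?thesis using U kj by simp
      qed
      have "0 \<le> \<epsilon>r" using dpos by (simp add: \<epsilon>r_def)
      then have thr_le: "thr j \<le> thr (Suc j)" using thr_step[of j] by linarith
      show "((kind G (fst \<sigma>) = Assign \<or> kind G (fst \<sigma>) = NonDet) \<longrightarrow> (\<forall>\<sigma>' \<in> succs G \<sigma>. U \<sigma>' < U \<sigma>))
      \<and> (kind G (fst \<sigma>) = Prob \<longrightarrow>
           (\<Sum>\<sigma>' \<in> {\<sigma>' \<in> succs G \<sigma>. U \<sigma>' < U \<sigma>}. trprob G \<sigma> \<sigma>') > real_of_rat \<epsilon>r)"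
      proof (intro conjI impI ballI)
        fix \<sigma>' assume k: "kind G (fst \<sigma>) = Assign \<or> kind G (fst \<sigma>) = NonDet" and s: "\<sigma>' \<in> succs G \<sigma>"
        have "V G (Suc j) \<sigma> = Min (V G j ` succs G \<sigma>)" using nb k by (auto simp: V.simps)
        also have "\<dots> \<le> V G j \<sigma>'" using s finite_succs[OF wf] by (intro Min_le) auto
        finally have "thr j < V G j \<sigma>'" using Pk thr_le by simp
        then show "U \<sigma>' < U \<sigma>" by (rule good[OF s])
      next
        assume k: "kind G (fst \<sigma>) = Prob"
        define Gd where "Gd = {\<sigma>' \<in> succs G \<sigma>. thr j < V G j \<sigma>'}"
        have fin: "finite (succs G \<sigma>)" by (rule finite_succs[OF wf])
        have pos: "0 \<le> rtp G \<sigma> \<sigma>'" if "\<sigma>' \<in> succs G \<sigma>" for \<sigma>'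
          using rtp_pos[OF wf v k that] by simp
        have Vb: "0 \<le> V G j \<sigma>' \<and> V G j \<sigma>' \<le> 1" if "\<sigma>' \<in> succs G \<sigma>" for \<sigma>'
          using V_bounds[OF wf valid_succs[OF wf that]] .
        have "V G (Suc j) \<sigma> = (\<Sum>\<sigma>'\<in>succs G \<sigma>. rtp G \<sigma> \<sigma>' * V G j \<sigma>')" using nb k by (simp add: V.simps)
        also have "\<dots> = (\<Sum>\<sigma>'\<in>Gd. rtp G \<sigma> \<sigma>' * V G j \<sigma>') + (\<Sum>\<sigma>'\<in>succs G \<sigma> - Gd. rtp G \<sigma> \<sigma>' * V G j \<sigma>')"
          using fin by (simp add: Gd_def sum.subset_diff[of Gd "succs G \<sigma>"] add.commute)
        also have "\<dots> \<le> (\<Sum>\<sigma>'\<in>Gd. rtp G \<sigma> \<sigma>') + (\<Sum>\<sigma>'\<in>succs G \<sigma> - Gd. rtp G \<sigma> \<sigma>' * thr j)"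
        proof (rule add_mono)
          show "(\<Sum>\<sigma>'\<in>Gd. rtp G \<sigma> \<sigma>' * V G j \<sigma>') \<le> (\<Sum>\<sigma>'\<in>Gd. rtp G \<sigma> \<sigma>')"
          proof (rule sum_mono)
            fix \<sigma>' assume "\<sigma>' \<in> Gd"
            then have "\<sigma>' \<in> succs G \<sigma>" by (simp add: Gd_def)
            then show "rtp G \<sigma> \<sigma>' * V G j \<sigma>' \<le> rtp G \<sigma> \<sigma>'"
              using pos Vb by (simp add: mult_left_le)
          qed
          show "(\<Sum>\<sigma>'\<in>succs G \<sigma> - Gd. rtp G \<sigma> \<sigma>' * V G j \<sigma>') \<le> (\<Sum>\<sigma>'\<in>succs G \<sigma> - Gd. rtp G \<sigma> \<sigma>' * thr j)"
          proof (rule sum_mono)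
            fix \<sigma>' assume "\<sigma>' \<in> succs G \<sigma> - Gd"
            then have "\<sigma>' \<in> succs G \<sigma>" "V G j \<sigma>' \<le> thr j" by (auto simp: Gd_def)
            then show "rtp G \<sigma> \<sigma>' * V G j \<sigma>' \<le> rtp G \<sigma> \<sigma>' * thr j"
              using pos by (simp add: mult_left_mono)
          qed
        qed
        also have "(\<Sum>\<sigma>'\<in>succs G \<sigma> - Gd. rtp G \<sigma> \<sigma>' * thr j) \<le> (\<Sum>\<sigma>'\<in>succs G \<sigma>. rtp G \<sigma> \<sigma>' * thr j)"
          using fin pos thr_nn[of j] by (intro sum_mono2) auto
        also have "(\<Sum>\<sigma>'\<in>succs G \<sigma>. rtp G \<sigma> \<sigma>' * thr j) = thr j"
          using rtp_sum[OF wf v k] by (simp add: sum_distrib_right[symmetric])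
        finally have "V G (Suc j) \<sigma> \<le> (\<Sum>\<sigma>'\<in>Gd. rtp G \<sigma> \<sigma>') + thr j" by simp
        then have gd: "\<epsilon>r < (\<Sum>\<sigma>'\<in>Gd. rtp G \<sigma> \<sigma>')" using Pk thr_step[of j] by linarith
        have sub: "Gd \<subseteq> {\<sigma>' \<in> succs G \<sigma>. U \<sigma>' < U \<sigma>}" using good by (auto simp: Gd_def)
        have "(\<Sum>\<sigma>'\<in>Gd. rtp G \<sigma> \<sigma>') \<le> (\<Sum>\<sigma>'\<in>{\<sigma>' \<in> succs G \<sigma>. U \<sigma>' < U \<sigma>}. rtp G \<sigma> \<sigma>')"
          using fin pos sub by (intro sum_mono2) auto
        with gd have "\<epsilon>r < (\<Sum>\<sigma>'\<in>{\<sigma>' \<in> succs G \<sigma>. U \<sigma>' < U \<sigma>}. rtp G \<sigma> \<sigma>')" by linarith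
        then show "real_of_rat \<epsilon>r < (\<Sum>\<sigma>'\<in>{\<sigma>' \<in> succs G \<sigma>. U \<sigma>' < U \<sigma>}. trprob G \<sigma> \<sigma>')"
          by (simp add: trprob_rtp of_rat_less flip: of_rat_sum)
      qed
    qed
  qed
qed


end
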